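(* There exists an $\widetilde{O}(\sqrt{n}+D)$-round randomized $\mathsf{CONGEST}$ algorithm that lets each vertex $v_i$ of $P$ learn its index $i$, the distance from $s$ to $v_i$, and the distance from $v_i$ to $t$, with high probability.
   Context: $G=(V,E)$ is a directed graph with $n=|V|$ whose edges are either unweighted or carry positive integer weights bounded by a polynomial in $n$. $G$ is the communication network (communication over edges in both directions); $D$ is the diameter of the underlying undirected unweighted graph. $\mathsf{CONGEST}$: synchronous rounds, each vertex may send an $O(\log n)$-bit message to each neighbour per round, unique $O(\log n)$-bit identifiers, unlimited local computation. "With high probability" means with probability $1-1/\operatorname{poly}(n)$. $P=(s=v_0,v_1,\dots,v_{h_{st}}=t)$ is a given shortest $s$-$t$ path. Initially the only knowledge about $P$ is: both endpoints of each edge of $P$ know that the edge belongs to $P$, $s$ knows it is the source and $t$ knows it is the target. *)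

theory Defs
  imports Complex_Main
begin

text \<open>Vertices are the naturals 0..n-1. A (weighted) directed graph is given by
  w :: nat => nat => nat option, where w u v = Some k means a directed edge (u,v)
  of positive integer weight k. Unweighted graphs are the case of all weights 1.\<close>

definition adj :: "(nat \<Rightarrow> nat \<Rightarrow> nat option) \<Rightarrow> nat \<Rightarrow> nat \<Rightarrow> bool" where
  "adj w u v \<longleftrightarrow> w u v \<noteq> None \<or> w v u \<noteq> None"

definition is_walk :: "(nat \<Rightarrow> nat \<Rightarrow> nat option) \<Rightarrow> nat list \<Rightarrow> bool" where
  "is_walk w xs \<longleftrightarrow> xs \<noteq> [] \<and> (\<forall>i. Suc i < length xs \<longrightarrow> w (xs ! i) (xs ! Suc i) \<noteq> None)"

definition walk_weight :: "(nat \<Rightarrow> nat \<Rightarrow> nat option) \<Rightarrow> nat list \<Rightarrow> nat" where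
  "walk_weight w xs = (\<Sum>i<length xs - 1. the (w (xs ! i) (xs ! Suc i)))"

definition dist :: "(nat \<Rightarrow> nat \<Rightarrow> nat option) \<Rightarrow> nat \<Rightarrow> nat \<Rightarrow> nat" where
  "dist w u v = (LEAST d. \<exists>xs. is_walk w xs \<and> hd xs = u \<and> last xs = v \<and> walk_weight w xs = d)"

definition is_uwalk :: "(nat \<Rightarrow> nat \<Rightarrow> nat option) \<Rightarrow> nat list \<Rightarrow> bool" where
  "is_uwalk w xs \<longleftrightarrow> xs \<noteq> [] \<and> (\<forall>i. Suc i < length xs \<longrightarrow> adj w (xs ! i) (xs ! Suc i))"

definition hop :: "(nat \<Rightarrow> nat \<Rightarrow> nat option) \<Rightarrow> nat \<Rightarrow> nat \<Rightarrow> nat" where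
  "hop w u v = (LEAST k. \<exists>xs. is_uwalk w xs \<and> hd xs = u \<and> last xs = v \<and> length xs = Suc k)"

definition diam :: "nat \<Rightarrow> (nat \<Rightarrow> nat \<Rightarrow> nat option) \<Rightarrow> nat" where
  "diam n w = Max {hop w u v | u v. u < n \<and> v < n}"

definition path_edges :: "nat list \<Rightarrow> (nat \<times> nat) set" where
  "path_edges ps = {(ps ! i, ps ! Suc i) | i. Suc i < length ps}"

text \<open>A valid instance: n vertices, edge weights in [1, n^W], identifiers injective and
  below n^I (i.e. O(log n) bits), connected communication graph, and ps a shortest
  s-t path (s = hd ps, t = last ps).\<close>
definition valid_instance ::
  "nat \<Rightarrow> nat \<Rightarrow> nat \<Rightarrow> (nat \<Rightarrow> nat \<Rightarrow> nat option) \<Rightarrow> (nat \<Rightarrow> nat) \<Rightarrow> nat list \<Rightarrow> bool" where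
  "valid_instance n W I w ident ps \<longleftrightarrow>
     (\<forall>u v k. w u v = Some k \<longrightarrow> u < n \<and> v < n \<and> u \<noteq> v \<and> 1 \<le> k \<and> k \<le> n ^ W) \<and>
     inj_on ident {..<n} \<and> (\<forall>v<n. ident v < n ^ I) \<and>
     (\<forall>u<n. \<forall>v<n. \<exists>xs. is_uwalk w xs \<and> hd xs = u \<and> last xs = v) \<and>
     is_walk w ps \<and> distinct ps \<and> set ps \<subseteq> {..<n} \<and>
     walk_weight w ps = dist w (hd ps) (last ps)"

record nbr_info =
  nb_id :: nat
  nb_wout :: "nat option"   \<comment> \<open>weight of edge to this neighbour, if any\<close>
  nb_win :: "nat option"    \<comment> \<open>weight of edge from this neighbour, if any\<close>
  nb_pout :: bool           \<comment> \<open>edge to this neighbour belongs to P\<close>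
  nb_pin :: bool            \<comment> \<open>edge from this neighbour belongs to P\<close>

record local_input =
  li_n :: nat
  li_id :: nat
  li_nbrs :: "nbr_info set"
  li_src :: bool
  li_tgt :: bool
  li_rand :: "bool list"

type_synonym inbox = "nat \<Rightarrow> nat option"  \<comment> \<open>sender identifier to received message\<close>

text \<open>An algorithm: given the local input and the history of received messages
  (one inbox per completed round), the message (a number, i.e. a bit string) sent to the
  neighbour with a given identifier, and the output (None = not yet terminated;
  Some (i, d(s,v), d(v,t)) = terminated with this output). Unlimited local computation
  is modelled by arbitrary HOL functions.\<close>
record algorithm =
  al_send :: "local_input \<Rightarrow> inbox list \<Rightarrow> nat \<Rightarrow> nat option"
  al_out :: "local_input \<Rightarrow> inbox list \<Rightarrow> (nat \<times> nat \<times> nat) option"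
  al_rbits :: "nat \<Rightarrow> nat"   \<comment> \<open>number of random bits per vertex, as function of n\<close>

definition local_in ::
  "nat \<Rightarrow> (nat \<Rightarrow> nat \<Rightarrow> nat option) \<Rightarrow> (nat \<Rightarrow> nat) \<Rightarrow> nat list \<Rightarrow> (nat \<Rightarrow> bool list) \<Rightarrow> nat \<Rightarrow> local_input" where
  "local_in n w ident ps \<rho> v =
     \<lparr> li_n = n, li_id = ident v,
       li_nbrs = {\<lparr> nb_id = ident u, nb_wout = w v u, nb_win = w u v,
                    nb_pout = ((v, u) \<in> path_edges ps), nb_pin = ((u, v) \<in> path_edges ps) \<rparr>
                  | u. u < n \<and> adj w u v},
       li_src = (v = hd ps), li_tgt = (v = last ps), li_rand = \<rho> v \<rparr>"

text \<open>Synchronous execution: hist r v is the list of inboxes of v after r rounds.\<close>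
primrec hist ::
  "algorithm \<Rightarrow> nat \<Rightarrow> (nat \<Rightarrow> nat \<Rightarrow> nat option) \<Rightarrow> (nat \<Rightarrow> nat) \<Rightarrow> nat list \<Rightarrow> (nat \<Rightarrow> bool list)
   \<Rightarrow> nat \<Rightarrow> nat \<Rightarrow> inbox list" where
  "hist A n w ident ps \<rho> 0 = (\<lambda>v. [])"
| "hist A n w ident ps \<rho> (Suc r) =
     (\<lambda>v. hist A n w ident ps \<rho> r v @
        [\<lambda>j. if \<exists>u<n. adj w u v \<and> ident u = j
             then (let u = (THE u. u < n \<and> adj w u v \<and> ident u = j)
                   in al_send A (local_in n w ident ps \<rho> u) (hist A n w ident ps \<rho> r u) (ident v))
             else None])"

definition out_at ::
  "algorithm \<Rightarrow> nat \<Rightarrow> (nat \<Rightarrow> nat \<Rightarrow> nat option) \<Rightarrow> (nat \<Rightarrow> nat) \<Rightarrow> nat list \<Rightarrow> (nat \<Rightarrow> bool list)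
   \<Rightarrow> nat \<Rightarrow> nat \<Rightarrow> (nat \<times> nat \<times> nat) option" where
  "out_at A n w ident ps \<rho> r v = al_out A (local_in n w ident ps \<rho> v) (hist A n w ident ps \<rho> r v)"

definition succeeds ::
  "algorithm \<Rightarrow> nat \<Rightarrow> (nat \<Rightarrow> nat \<Rightarrow> nat option) \<Rightarrow> (nat \<Rightarrow> nat) \<Rightarrow> nat list \<Rightarrow> (nat \<Rightarrow> bool list)
   \<Rightarrow> nat \<Rightarrow> bool" where
  "succeeds A n w ident ps \<rho> T \<longleftrightarrow>
     (\<forall>v<n. \<exists>r\<le>T. out_at A n w ident ps \<rho> r v \<noteq> None) \<and>
     (\<forall>i<length ps.
        out_at A n w ident ps \<rho> (LEAST r. out_at A n w ident ps \<rho> r (ps ! i) \<noteq> None) (ps ! i)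
        = Some (i, dist w (hd ps) (ps ! i), dist w (ps ! i) (last ps)))"

text \<open>Random strings: each vertex v < n gets L uniformly random bits, independently.\<close>
definition rand_space :: "nat \<Rightarrow> nat \<Rightarrow> (nat \<Rightarrow> bool list) set" where
  "rand_space n L = {\<rho>. \<forall>v. length (\<rho> v) = (if v < n then L else 0)}"

definition success_prob ::
  "algorithm \<Rightarrow> nat \<Rightarrow> (nat \<Rightarrow> nat \<Rightarrow> nat option) \<Rightarrow> (nat \<Rightarrow> nat) \<Rightarrow> nat list \<Rightarrow> nat \<Rightarrow> real" where
  "success_prob A n w ident ps T =
     real (card {\<rho> \<in> rand_space n (al_rbits A n). succeeds A n w ident ps \<rho> T})
     / real (card (rand_space n (al_rbits A n)))"

text \<open>Messages have O(log n) bits: every message is a number below max 2 n ^ B.\<close>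
definition congest_bounded :: "algorithm \<Rightarrow> nat \<Rightarrow> bool" where
  "congest_bounded A B \<longleftrightarrow>
     (\<forall>inp H j m. al_send A inp H j = Some m \<longrightarrow> m < (max 2 (li_n inp)) ^ B)"

end

theory Submission
  imports Defs "HOL-Library.Log_Nat" "HOL-Library.FuncSet"
begin

locale flood =
  fixes Vs :: "nat set" and nb :: "nat \<Rightarrow> nat \<Rightarrow> bool"
    and K Bc :: "nat \<Rightarrow> nat \<Rightarrow> nat set" and snd :: "nat \<Rightarrow> nat \<Rightarrow> nat option"
    and Items :: "nat set"
  assumes fin: "finite Items"
  and KI: "u \<in> Vs \<Longrightarrow> K t u \<subseteq> Items"
  and B0: "u \<in> Vs \<Longrightarrow> Bc 0 u = {}"
  and sndd: "u \<in> Vs \<Longrightarrow> snd t u = (if K t u - Bc t u = {} then None else Some (Min (K t u - Bc t u)))"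
  and Bstep: "u \<in> Vs \<Longrightarrow> Bc (Suc t) u = Bc t u \<union> set_option (snd t u)"
  and Kstep: "u \<in> Vs \<Longrightarrow> K t u \<union> {x. \<exists>w\<in>Vs. nb w u \<and> snd t w = Some x} \<subseteq> K (Suc t) u"
begin

fun R :: "nat \<Rightarrow> nat \<Rightarrow> nat set" where
  "R x 0 = {u \<in> Vs. x \<in> K 0 u}"
| "R x (Suc d) = R x d \<union> {u \<in> Vs. \<exists>w \<in> R x d. nb w u}"

lemma R_sub: "R x d \<subseteq> Vs"
  by (induction d) auto

lemma Kfin: "u \<in> Vs \<Longrightarrow> finite (K t u)"
  using KI fin finite_subset by blast

lemma BK: "u \<in> Vs \<Longrightarrow> Bc t u \<subseteq> K t u"
proof (induction t)
  case 0 then show ?case using B0 by auto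
next
  case (Suc t)
  have "set_option (snd t u) \<subseteq> K t u"
    using sndd[OF Suc.prems, of t] Min_in[of "K t u - Bc t u"] Kfin[OF Suc.prems, of t]
    by (auto split: if_splits)
  then show ?case using Suc Bstep[OF Suc.prems] Kstep[OF Suc.prems, of t] by auto
qed

lemma Bfin: "u \<in> Vs \<Longrightarrow> finite (Bc t u)"
  using BK Kfin finite_subset by blast

lemma BK_nb: "w \<in> Vs \<Longrightarrow> u \<in> Vs \<Longrightarrow> nb w u \<Longrightarrow> Bc t w \<subseteq> K t u"
proof (induction t)
  case 0 then show ?case using B0 by auto
next
  case (Suc t)
  have "set_option (snd t w) \<subseteq> K (Suc t) u"
    using Kstep[OF Suc.prems(2), of t] Suc.prems by auto
  moreover have "K t u \<subseteq> K (Suc t) u" using Kstep[OF Suc.prems(2), of t] by auto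
  ultimately show ?case using Suc Bstep[OF Suc.prems(1)] by auto
qed

definition lt :: "nat set \<Rightarrow> nat \<Rightarrow> nat" where "lt S x = card {y \<in> S. y < x}"

lemma GH: "(\<forall>x d u. u \<in> R x d \<and> x \<notin> K t u \<longrightarrow> t + 1 \<le> lt (K t u) x + d) \<and>
           (\<forall>x d u. u \<in> R x d \<and> x \<notin> Bc t u \<longrightarrow> t \<le> lt (Bc t u) x + d)"
proof (induction t)
  case 0
  have "u \<in> R x d \<Longrightarrow> x \<notin> K 0 u \<Longrightarrow> 1 \<le> d" for x d u
    by (cases d) auto
  then show ?case by fastforce
next
  case (Suc t)
  have H: "u \<in> R x d \<Longrightarrow> x \<notin> Bc (Suc t) u \<Longrightarrow> Suc t \<le> lt (Bc (Suc t) u) x + d" for x d u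
  proof -
    assume u: "u \<in> R x d" and xn: "x \<notin> Bc (Suc t) u"
    have uV: "u \<in> Vs" using u R_sub by auto
    have xn0: "x \<notin> Bc t u" using xn Bstep[OF uV] by auto
    have ih: "t \<le> lt (Bc t u) x + d" using Suc.IH u xn0 by blast
    show ?thesis
    proof (cases "\<exists>y. snd t u = Some y \<and> y < x")
      case True
      then obtain y where y: "snd t u = Some y" "y < x" by auto
      have yn: "y \<notin> Bc t u" using y(1) sndd[OF uV, of t] Min_in[of "K t u - Bc t u"]
          Kfin[OF uV, of t] by (auto split: if_splits)
      have "{z \<in> Bc (Suc t) u. z < x} = insert y {z \<in> Bc t u. z < x}"
        using Bstep[OF uV, of t] y by auto
      then have "lt (Bc (Suc t) u) x = Suc (lt (Bc t u) x)"
        unfolding lt_def using yn Bfin[OF uV, of t] by simp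
      then show ?thesis using ih by simp
    next
      case False
      have sub: "{z \<in> K t u. z < x} \<subseteq> Bc t u \<and> x \<notin> K t u"
      proof (cases "K t u - Bc t u = {}")
        case True then show ?thesis using xn0 by auto
      next
        case ne: False
        then have s: "snd t u = Some (Min (K t u - Bc t u))" using sndd[OF uV] by auto
        have fin2: "finite (K t u - Bc t u)" using Kfin[OF uV] by auto
        have m: "Min (K t u - Bc t u) \<ge> x" using False s by auto
        have "Min (K t u - Bc t u) \<noteq> x" using xn Bstep[OF uV, of t] s by auto
        then have "Min (K t u - Bc t u) > x" using m by auto
        have "z \<in> K t u \<Longrightarrow> z \<le> x \<Longrightarrow> z \<in> Bc t u" for z
          using Min_le[OF fin2, of z] \<open>Min (K t u - Bc t u) > x\<close> by fastforce
        then show ?thesis using xn0 by auto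
      qed
      have g: "t + 1 \<le> lt (K t u) x + d" using Suc.IH u sub by blast
      have "lt (K t u) x \<le> lt (Bc (Suc t) u) x"
        unfolding lt_def
        apply (rule card_mono)
        using Bfin[OF uV, of "Suc t"] apply simp
        using sub Bstep[OF uV, of t] by auto
      then show ?thesis using g by simp
    qed
  qed
  have G: "u \<in> R x d \<Longrightarrow> x \<notin> K (Suc t) u \<Longrightarrow> Suc t + 1 \<le> lt (K (Suc t) u) x + d" for x d u
  proof (induction d arbitrary: u)
    case 0
    then have "x \<in> K 0 u" "u \<in> Vs" by auto
    moreover have "K t u \<subseteq> K (Suc t) u" if "u \<in> Vs" for t
      using Kstep[OF that, of t] by auto
    ultimately have "x \<in> K t' u" for t' by (induction t') auto
    then show ?case using 0 by auto
  next
    case (Suc d)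
    show ?case
    proof (cases "u \<in> R x d")
      case True
      then show ?thesis using Suc by fastforce
    next
      case False
      then obtain w where w: "w \<in> R x d" "nb w u" "u \<in> Vs" using Suc.prems by auto
      have wV: "w \<in> Vs" using w R_sub by auto
      have bk: "Bc (Suc t) w \<subseteq> K (Suc t) u" using BK_nb[OF wV w(3) w(2)] .
      then have "x \<notin> Bc (Suc t) w" using Suc.prems by auto
      then have h: "Suc t \<le> lt (Bc (Suc t) w) x + d" using H w by blast
      have "lt (Bc (Suc t) w) x \<le> lt (K (Suc t) u) x"
        unfolding lt_def apply (rule card_mono)
        using Kfin[OF w(3)] apply simp using bk by auto
      then show ?thesis using h by simp
    qed
  qed
  show ?case using G H by blast
qed

theorem flood_done:
  assumes "u \<in> R x d" "x \<in> Items"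
  shows "x \<in> K (d + card {y \<in> Items. y < x}) u"
proof (rule ccontr)
  assume a: "x \<notin> K (d + card {y \<in> Items. y < x}) u"
  have uV: "u \<in> Vs" using assms R_sub by auto
  have "d + card {y \<in> Items. y < x} + 1 \<le> lt (K (d + card {y \<in> Items. y < x}) u) x + d"
    using GH assms a by blast
  moreover have "lt (K (d + card {y \<in> Items. y < x}) u) x \<le> card {y \<in> Items. y < x}"
    unfolding lt_def apply (rule card_mono) using fin apply simp using KI[OF uV] by auto
  ultimately show False by simp
qed

end

type_synonym stt = "(nat \<times> nat \<times> nat) option \<times> nat set \<times> nat set"

definition encA :: "nat \<Rightarrow> nat \<times> nat \<times> nat \<Rightarrow> nat" where
  "encA N x = (case x of (a, b, d) \<Rightarrow> a + N * (b + N * d))"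
definition decA :: "nat \<Rightarrow> nat \<Rightarrow> nat \<times> nat \<times> nat" where
  "decA N m = (m mod N, m div N mod N, m div N div N)"
definition encI :: "nat \<Rightarrow> nat \<Rightarrow> nat \<Rightarrow> nat \<Rightarrow> nat \<Rightarrow> nat \<Rightarrow> nat" where
  "encI N a b d e f = a + N * (b + N * (d + N * (e + N * f)))"
definition fA :: "nat \<Rightarrow> nat \<Rightarrow> nat" where "fA N y = y mod N"
definition fB :: "nat \<Rightarrow> nat \<Rightarrow> nat" where "fB N y = y div N mod N"
definition fC :: "nat \<Rightarrow> nat \<Rightarrow> nat" where "fC N y = y div N div N mod N"
definition fE :: "nat \<Rightarrow> nat \<Rightarrow> nat" where "fE N y = y div N div N div N mod N"
definition fF :: "nat \<Rightarrow> nat \<Rightarrow> nat" where "fF N y = y div N div N div N div N"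

lemma decA_encA: "a < N \<Longrightarrow> b < N \<Longrightarrow> decA N (encA N (a, b, d)) = (a, b, d)"
  by (simp add: decA_def encA_def)

lemma fields_encI:
  assumes "a < N" "b < N" "d < N" "e < N"
  shows "fA N (encI N a b d e f) = a" "fB N (encI N a b d e f) = b" "fC N (encI N a b d e f) = d"
    "fE N (encI N a b d e f) = e" "fF N (encI N a b d e f) = f"
  using assms by (simp_all add: fA_def fB_def fC_def fE_def fF_def encI_def)

definition has_pred :: "local_input \<Rightarrow> bool" where
  "has_pred inp = (\<exists>nb \<in> li_nbrs inp. nb_pin nb)"
definition predi :: "local_input \<Rightarrow> nbr_info" where
  "predi inp = (SOME nb. nb \<in> li_nbrs inp \<and> nb_pin nb)"
definition has_succ :: "local_input \<Rightarrow> bool" where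
  "has_succ inp = (\<exists>nb \<in> li_nbrs inp. nb_pout nb)"
definition succi :: "local_input \<Rightarrow> nbr_info" where
  "succi inp = (SOME nb. nb \<in> li_nbrs inp \<and> nb_pout nb)"

fun PRE :: "nat \<Rightarrow> nat set \<Rightarrow> nat \<Rightarrow> nat \<Rightarrow> nat \<times> nat" where
  "PRE N K 0 a = (0, 0)"
| "PRE N K (Suc f) a = (if a = 0 then (0, 0) else
     (let y = (SOME y. y \<in> K \<and> fE N y = a); p = PRE N K f (fA N y) in (fst p + fB N y, snd p + fC N y)))"

definition TOT :: "nat \<Rightarrow> nat set \<Rightarrow> nat \<Rightarrow> nat \<times> nat" where
  "TOT N K f = (let y = (SOME y. y \<in> K \<and> fF N y = 1); p = PRE N K f (fA N y) in (fst p + fB N y, snd p + fC N y))"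

definition closedK :: "nat \<Rightarrow> nat set \<Rightarrow> bool" where
  "closedK N K \<longleftrightarrow> (\<exists>y\<in>K. fF N y = 1) \<and> (\<forall>y\<in>K. fA N y = 0 \<or> (\<exists>z\<in>K. fE N z = fA N y))"

locale params =
  fixes c W I :: nat
begin

definition NB :: "nat \<Rightarrow> nat" where "NB n = n ^ (W + I + 2)"
definition qf :: "nat \<Rightarrow> nat" where "qf n = (floorlog 2 n - 1) div 2"
definition Lf :: "nat \<Rightarrow> nat" where "Lf n = 2 ^ qf n * ((c + 2) * floorlog 2 n)"
definition BB :: nat where "BB = 5 * (W + I + 2)"

definition mkd :: "local_input \<Rightarrow> bool" where
  "mkd inp \<longleftrightarrow> li_src inp \<or> li_rand inp = replicate (qf (li_n inp)) True"

definition cur :: "local_input \<Rightarrow> stt \<Rightarrow> (nat \<times> nat \<times> nat) option" where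
  "cur inp s = (if li_src inp then Some (0, 0, 0) else if mkd inp then Some (Suc (li_id inp), 0, 0) else fst s)"

definition item :: "local_input \<Rightarrow> stt \<Rightarrow> nat set" where
  "item inp s = (if \<not> li_src inp \<and> (mkd inp \<or> li_tgt inp) then
     (case fst s of Some (a, b, d) \<Rightarrow> {encI (NB (li_n inp)) a b d (Suc (li_id inp)) (if li_tgt inp then 1 else 0)}
      | None \<Rightarrow> {}) else {})"

definition known :: "local_input \<Rightarrow> stt \<Rightarrow> nat set" where
  "known inp s = item inp s \<union> fst (snd s)"

definition cand :: "local_input \<Rightarrow> stt \<Rightarrow> nat set" where
  "cand inp s = known inp s - snd (snd s)"

definition SEND :: "local_input \<Rightarrow> stt \<Rightarrow> nat \<Rightarrow> nat \<Rightarrow> nat option" where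
  "SEND inp s r j = (if r < Lf (li_n inp) then
     (if has_succ inp \<and> j = nb_id (succi inp) then map_option (encA (NB (li_n inp))) (cur inp s) else None)
     else (if cand inp s = {} then None else Some (Min (cand inp s))))"

definition ASEND :: "local_input \<Rightarrow> stt \<Rightarrow> nat \<Rightarrow> nat \<Rightarrow> nat option" where
  "ASEND inp s r j = (case SEND inp s r j of None \<Rightarrow> None
     | Some x \<Rightarrow> (if x < max 2 (li_n inp) ^ BB then Some x else None))"

definition STEP :: "local_input \<Rightarrow> stt \<Rightarrow> nat \<Rightarrow> inbox \<Rightarrow> stt" where
  "STEP inp s r ib = (if r < Lf (li_n inp) then
     ((if has_pred inp then (case ib (nb_id (predi inp)) of
          Some m \<Rightarrow> Some (case decA (NB (li_n inp)) m of (a, b, d) \<Rightarrow> (a, Suc b, d + the (nb_win (predi inp))))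
        | None \<Rightarrow> fst s) else fst s), snd s)
     else (fst s, fst (snd s) \<union> {m. \<exists>j. ib j = Some m},
           snd (snd s) \<union> (if cand inp s = {} then {} else {Min (cand inp s)})))"

definition OUT :: "local_input \<Rightarrow> stt \<Rightarrow> nat \<Rightarrow> (nat \<times> nat \<times> nat) option" where
  "OUT inp s r = (if \<not> li_src inp \<and> \<not> has_pred inp then Some (0, 0, 0)
     else if li_src inp \<and> li_tgt inp then Some (0, 0, 0)
     else if Lf (li_n inp) \<le> r \<and> closedK (NB (li_n inp)) (known inp s) \<and> cur inp s \<noteq> None then
       (case cur inp s of Some (a, b, d) \<Rightarrow>
          (let N = NB (li_n inp); K = known inp s; p = PRE N K (li_n inp) a; tt = TOT N K (li_n inp) in
           Some (fst p + b, snd p + d, snd tt - (snd p + d))))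
     else None)"

definition ST :: "local_input \<Rightarrow> inbox list \<Rightarrow> stt" where
  "ST inp H = fst (foldl (\<lambda>(s, r) x. (STEP inp s r x, Suc r)) ((None, {}, {}), 0) H)"

lemma foldl_snd: "snd (foldl (\<lambda>(s, r) x. (STEP inp s r x, Suc r)) (s0, r0) H) = r0 + length H"
  by (induction H arbitrary: s0 r0) auto

lemma ST_snoc: "ST inp (H @ [x]) = STEP inp (ST inp H) (length H) x"
  unfolding ST_def using foldl_snd[of inp "(None, {}, {})" 0 H]
  by (simp add: case_prod_beta)

lemma ST_Nil: "ST inp [] = (None, {}, {})" by (simp add: ST_def)

definition ALG :: algorithm where
  "ALG = \<lparr> al_send = (\<lambda>inp H j. ASEND inp (ST inp H) (length H) j),
           al_out = (\<lambda>inp H. OUT inp (ST inp H) (length H)),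
           al_rbits = qf \<rparr>"

lemma al_send_ALG[simp]: "al_send ALG inp H j = ASEND inp (ST inp H) (length H) j"
  by (simp add: ALG_def)
lemma al_out_ALG[simp]: "al_out ALG inp H = OUT inp (ST inp H) (length H)"
  by (simp add: ALG_def)
lemma al_rbits_ALG[simp]: "al_rbits ALG = qf"
  by (simp add: ALG_def)

lemma congest: "congest_bounded ALG BB"
  unfolding congest_bounded_def ALG_def ASEND_def by (auto split: option.splits if_splits)

end

locale inst = params +
  fixes n :: nat and w :: "nat \<Rightarrow> nat \<Rightarrow> nat option" and ident :: "nat \<Rightarrow> nat"
    and ps :: "nat list" and \<rho> :: "nat \<Rightarrow> bool list"
  assumes valid: "valid_instance n W I w ident ps" and n2: "2 \<le> n"
begin

abbreviation LI where "LI v \<equiv> local_in n w ident ps \<rho> v"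
abbreviation HS where "HS r v \<equiv> hist ALG n w ident ps \<rho> r v"
definition S where "S r v = ST (LI v) (HS r v)"

lemma wdom: "w u v = Some k \<Longrightarrow> u < n \<and> v < n \<and> u \<noteq> v \<and> 1 \<le> k \<and> k \<le> n ^ W"
  using valid unfolding valid_instance_def by blast
lemma injid: "inj_on ident {..<n}" using valid unfolding valid_instance_def by blast
lemma idb: "v < n \<Longrightarrow> ident v < n ^ I" using valid unfolding valid_instance_def by blast
lemma conn: "u < n \<Longrightarrow> v < n \<Longrightarrow> \<exists>xs. is_uwalk w xs \<and> hd xs = u \<and> last xs = v"
  using valid unfolding valid_instance_def by blast
lemma pwalk: "is_walk w ps" and pdist: "distinct ps" and pset: "set ps \<subseteq> {..<n}"
  and pshort: "walk_weight w ps = dist w (hd ps) (last ps)"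
  using valid unfolding valid_instance_def by blast+

lemma adj_lt: "adj w u v \<Longrightarrow> u < n \<and> v < n"
  unfolding adj_def using wdom by fastforce

lemma HS_len: "length (HS r v) = r"
  by (induction r) auto

definition IB :: "nat \<Rightarrow> nat \<Rightarrow> inbox" where
  "IB r v = (\<lambda>j. if \<exists>u<n. adj w u v \<and> ident u = j
             then (let u = (THE u. u < n \<and> adj w u v \<and> ident u = j)
                   in ASEND (LI u) (S r u) r (ident v))
             else None)"

lemma S_0: "S 0 v = (None, {}, {})"
  by (simp add: S_def ST_Nil)

lemma S_Suc: "S (Suc r) v = STEP (LI v) (S r v) r (IB r v)"
proof -
  have e: "al_send ALG (LI u) (HS r u) j = ASEND (LI u) (S r u) r j" for u j
    by (simp add: S_def HS_len)
  have "HS (Suc r) v = HS r v @ [IB r v]"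
    unfolding IB_def hist.simps e by simp
  then show ?thesis unfolding S_def by (simp add: ST_snoc HS_len)
qed

lemma IB_at: "u < n \<Longrightarrow> adj w u v \<Longrightarrow> IB r v (ident u) = ASEND (LI u) (S r u) r (ident v)"
proof -
  assume u: "u < n" "adj w u v"
  have "(THE u'. u' < n \<and> adj w u' v \<and> ident u' = ident u) = u"
    apply (rule the_equality) using u injid by (auto simp: inj_on_def)
  then show ?thesis unfolding IB_def using u by auto
qed

lemma IB_some: "IB r v j = Some m \<Longrightarrow> \<exists>u<n. adj w u v \<and> ident u = j \<and> ASEND (LI u) (S r u) r (ident v) = Some m"
proof -
  assume a: "IB r v j = Some m"
  then obtain u where u: "u < n" "adj w u v" "ident u = j"
    unfolding IB_def by (auto split: if_splits)
  then show ?thesis using IB_at[OF u(1,2), of r] a by auto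
qed

lemma li_simps[simp]: "li_n (LI v) = n" "li_id (LI v) = ident v" "li_rand (LI v) = \<rho> v"
  "li_src (LI v) = (v = hd ps)" "li_tgt (LI v) = (v = last ps)"
  by (simp_all add: local_in_def)

lemma nbrs: "li_nbrs (LI v) = {\<lparr> nb_id = ident u, nb_wout = w v u, nb_win = w u v,
                    nb_pout = ((v, u) \<in> path_edges ps), nb_pin = ((u, v) \<in> path_edges ps) \<rparr>
                  | u. u < n \<and> adj w u v}"
  by (simp add: local_in_def)

abbreviation h where "h \<equiv> length ps - 1"
abbreviation P where "P i \<equiv> ps ! i"

lemma ps_ne: "ps \<noteq> []" using pwalk by (simp add: is_walk_def)
lemma len_ps: "length ps = Suc h" using ps_ne by (cases ps) auto
lemma P_lt: "i \<le> h \<Longrightarrow> P i < n" using pset len_ps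
  by (metis lessThan_iff less_Suc_eq_le nth_mem subsetD)
lemma P_inj: "i \<le> h \<Longrightarrow> j \<le> h \<Longrightarrow> P i = P j \<longleftrightarrow> i = j"
  using pdist len_ps by (simp add: nth_eq_iff_index_eq)
lemma hd_P: "hd ps = P 0" using ps_ne by (simp add: hd_conv_nth)
lemma last_P: "last ps = P h" using ps_ne by (simp add: last_conv_nth)

lemma edge: "i < h \<Longrightarrow> w (P i) (P (Suc i)) \<noteq> None"
  using pwalk len_ps unfolding is_walk_def by auto

lemma pe_iff: "(x, y) \<in> path_edges ps \<longleftrightarrow> (\<exists>k<h. x = P k \<and> y = P (Suc k))"
proof -
  have "(x, y) \<in> path_edges ps \<longleftrightarrow> (\<exists>k. Suc k < length ps \<and> x = P k \<and> y = P (Suc k))"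
    unfolding path_edges_def by blast
  moreover have "Suc k < length ps \<longleftrightarrow> k < h" for k by (simp add: less_diff_conv)
  ultimately show ?thesis by blast
qed

lemma in_path: "v \<in> set ps \<longleftrightarrow> (\<exists>i\<le>h. v = P i)"
  using len_ps unfolding in_set_conv_nth by (metis less_Suc_eq_le)

definition rec :: "nat \<Rightarrow> nat \<Rightarrow> nbr_info" where
  "rec v u = \<lparr> nb_id = ident u, nb_wout = w v u, nb_win = w u v,
                    nb_pout = ((v, u) \<in> path_edges ps), nb_pin = ((u, v) \<in> path_edges ps) \<rparr>"

lemma nbrs': "li_nbrs (LI v) = {rec v u | u. u < n \<and> adj w u v}"
  unfolding nbrs rec_def by simp

lemma pin_set: "i \<le> h \<Longrightarrow> {nb \<in> li_nbrs (LI (P i)). nb_pin nb} = (if i = 0 then {} else {rec (P i) (P (i - 1))})"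
proof -
  assume i: "i \<le> h"
  have "nb_pin (rec (P i) u) \<longleftrightarrow> (0 < i \<and> u = P (i - 1))" if "u < n" for u
  proof -
    have "nb_pin (rec (P i) u) \<longleftrightarrow> (\<exists>k<h. u = P k \<and> P i = P (Suc k))"
      by (simp add: rec_def pe_iff)
    also have "\<dots> \<longleftrightarrow> (0 < i \<and> u = P (i - 1))"
    proof
      assume "\<exists>k<h. u = P k \<and> P i = P (Suc k)"
      then obtain k where k: "k < h" "u = P k" "P i = P (Suc k)" by blast
      then have "i = Suc k" using P_inj[of i "Suc k"] i by simp
      then show "0 < i \<and> u = P (i - 1)" using k by simp
    next
      assume a: "0 < i \<and> u = P (i - 1)"
      then have "i - 1 < h \<and> u = P (i - 1) \<and> P i = P (Suc (i - 1))" using i by auto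
      then show "\<exists>k<h. u = P k \<and> P i = P (Suc k)" by blast
    qed
    finally show ?thesis .
  qed
  moreover have "0 < i \<Longrightarrow> adj w (P (i - 1)) (P i)"
    using edge[of "i - 1"] i by (simp add: adj_def)
  moreover have "0 < i \<Longrightarrow> P (i - 1) < n" using P_lt i by auto
  ultimately show ?thesis unfolding nbrs' by auto
qed

lemma pout_set: "i \<le> h \<Longrightarrow> {nb \<in> li_nbrs (LI (P i)). nb_pout nb} = (if i = h then {} else {rec (P i) (P (Suc i))})"
proof -
  assume i: "i \<le> h"
  have "nb_pout (rec (P i) u) \<longleftrightarrow> (i < h \<and> u = P (Suc i))" if "u < n" for u
  proof -
    have "nb_pout (rec (P i) u) \<longleftrightarrow> (\<exists>k<h. P i = P k \<and> u = P (Suc k))"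
      by (simp add: rec_def pe_iff)
    also have "\<dots> \<longleftrightarrow> (i < h \<and> u = P (Suc i))"
      using P_inj i by auto
    finally show ?thesis .
  qed
  moreover have "i < h \<Longrightarrow> adj w (P (Suc i)) (P i)"
    using edge[of "i"] i by (simp add: adj_def)
  moreover have "i < h \<Longrightarrow> P (Suc i) < n" using P_lt i by auto
  ultimately have "i < h \<Longrightarrow> nb_pout (rec (P i) (P (Suc i)))" by blast
  show ?thesis
  proof (cases "i = h")
    case True then show ?thesis unfolding nbrs' using \<open>\<And>u. u < n \<Longrightarrow> _\<close> by auto
  next
    case False
    then have ih: "i < h" using i by auto
    show ?thesis unfolding nbrs' using \<open>\<And>u. u < n \<Longrightarrow> _\<close> ih \<open>i < h \<Longrightarrow> nb_pout _\<close>
      \<open>i < h \<Longrightarrow> adj w (P (Suc i)) (P i)\<close> \<open>i < h \<Longrightarrow> P (Suc i) < n\<close> by auto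
  qed
qed

lemma has_pred_P: "i \<le> h \<Longrightarrow> has_pred (LI (P i)) \<longleftrightarrow> 0 < i"
  using pin_set[of i] unfolding has_pred_def by (auto split: if_splits)
lemma predi_P: "0 < i \<Longrightarrow> i \<le> h \<Longrightarrow> predi (LI (P i)) = rec (P i) (P (i - 1))"
  using pin_set[of i] unfolding predi_def by (auto split: if_splits)
lemma has_succ_P: "i \<le> h \<Longrightarrow> has_succ (LI (P i)) \<longleftrightarrow> i < h"
  using pout_set[of i] unfolding has_succ_def by (auto split: if_splits)
lemma succi_P: "i < h \<Longrightarrow> succi (LI (P i)) = rec (P i) (P (Suc i))"
  using pout_set[of i] unfolding succi_def by (auto split: if_splits)

lemma nonpath: "v \<notin> set ps \<Longrightarrow> \<not> has_pred (LI v) \<and> \<not> has_succ (LI v) \<and> v \<noteq> hd ps \<and> v \<noteq> last ps"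
proof -
  assume "v \<notin> set ps"
  then have nv: "\<And>i. i \<le> h \<Longrightarrow> v \<noteq> P i" using in_path by blast
  have "\<not> (k < h \<and> v = P (Suc k))" for k using nv[of "Suc k"] by auto
  moreover have "\<not> (k < h \<and> v = P k)" for k using nv[of k] by auto
  ultimately show ?thesis
    unfolding has_pred_def has_succ_def nbrs' using nv[of 0] nv[of h] hd_P last_P
    by (auto simp: rec_def pe_iff; blast)
qed

lemma src_P: "i \<le> h \<Longrightarrow> (P i = hd ps) \<longleftrightarrow> i = 0"
  using P_inj hd_P by auto
lemma tgt_P: "i \<le> h \<Longrightarrow> (P i = last ps) \<longleftrightarrow> i = h"
  using P_inj last_P by auto

end

context inst begin

abbreviation L where "L \<equiv> Lf n"
abbreviation N where "N \<equiv> NB n"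

definition mk :: "nat \<Rightarrow> bool" where "mk i \<longleftrightarrow> i = 0 \<or> \<rho> (P i) = replicate (qf n) True"

fun jj :: "nat \<Rightarrow> nat" where
  "jj 0 = 0"
| "jj (Suc i) = (if mk (Suc i) then Suc i else jj i)"

definition code :: "nat \<Rightarrow> nat" where "code j = (if j = 0 then 0 else Suc (ident (P j)))"
definition ew :: "nat \<Rightarrow> nat" where "ew i = the (w (P i) (P (Suc i)))"
definition pw :: "nat \<Rightarrow> nat" where "pw i = (\<Sum>k<i. ew k)"

lemma jj_le: "jj i \<le> i" by (induction i) auto
lemma jj_mk: "mk (jj i)" by (induction i) (auto simp: mk_def)
lemma pw_Suc: "pw (Suc i) = pw i + ew i" by (simp add: pw_def)
lemma pw_mono: "i \<le> j \<Longrightarrow> pw i \<le> pw j"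
  unfolding pw_def by (rule sum_mono2) auto

lemma ew_le: "i < h \<Longrightarrow> ew i \<le> n ^ W"
  using edge[of i] wdom unfolding ew_def by fastforce

lemma pw_le: "i \<le> h \<Longrightarrow> pw i \<le> i * n ^ W"
proof (induction i)
  case (Suc i) then show ?case using ew_le[of i] by (simp add: pw_Suc)
qed (simp add: pw_def)

lemma h_lt: "h < n"
  using P_lt[of h] pdist pset len_ps
  by (metis card_lessThan card_mono distinct_card finite_lessThan le_imp_less_Suc lessI less_le_trans)

lemma N_big: "n ^ I < N" "n < N" "n * n ^ W < N"
proof -
  have n1: "1 < n" using n2 by simp
  show "n ^ I < N" unfolding NB_def using n1 by (intro power_strict_increasing) auto
  show "n < N" unfolding NB_def using n1 power_strict_increasing[of 1 "W + I + 2" n] by simp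
  have "n * n ^ W = n ^ (W + 1)" by simp
  also have "\<dots> < N" unfolding NB_def using n1 by (intro power_strict_increasing) auto
  finally show "n * n ^ W < N" .
qed

lemma code_lt: "j \<le> h \<Longrightarrow> code j < N"
  using idb[OF P_lt[of j]] N_big(1) by (auto simp: code_def)

lemma pw_lt: "i \<le> h \<Longrightarrow> pw i < N"
proof -
  assume "i \<le> h"
  then have "pw i \<le> h * n ^ W" using pw_le[of i] h_lt
    by (meson le_trans mult_le_mono1)
  also have "\<dots> \<le> n * n ^ W" using h_lt by simp
  finally show ?thesis using N_big(3) by simp
qed

lemma encA_lt: "a < N \<Longrightarrow> b < N \<Longrightarrow> d < N \<Longrightarrow> encA N (a, b, d) < N ^ 3"
proof -
  assume a: "a < N" "b < N" "d < N"
  have "a + N * (b + N * d) \<le> (N - 1) + N * ((N - 1) + N * (N - 1))"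
    using a by (intro add_mono mult_le_mono order.refl) auto
  also have "\<dots> < N ^ 3" using a
    by (cases N) (auto simp: power3_eq_cube algebra_simps)
  finally show ?thesis by (simp add: encA_def)
qed

lemma N3_le: "N ^ 3 \<le> max 2 n ^ BB"
proof -
  have "max 2 n = n" using n2 by simp
  moreover have "N ^ 3 = n ^ ((W + I + 2) * 3)" by (simp only: NB_def power_mult)
  moreover have "n ^ ((W + I + 2) * 3) \<le> n ^ BB" unfolding BB_def
    using n2 by (intro power_increasing) auto
  ultimately show ?thesis by simp
qed

definition curv :: "nat \<Rightarrow> nat \<Rightarrow> (nat \<times> nat \<times> nat) option" where
  "curv i r = (if i - jj i \<le> r then Some (code (jj i), i - jj i, pw i - pw (jj i)) else None)"
definition incv :: "nat \<Rightarrow> nat \<Rightarrow> (nat \<times> nat \<times> nat) option" where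
  "incv i r = (if 0 < i \<and> i - jj (i - 1) \<le> r then Some (code (jj (i - 1)), i - jj (i - 1), pw i - pw (jj (i - 1))) else None)"

lemma mkd_P: "i \<le> h \<Longrightarrow> mkd (LI (P i)) \<longleftrightarrow> mk i"
  using src_P by (simp add: mkd_def mk_def)

lemma cur_from_inc: "i \<le> h \<Longrightarrow> fst s = incv i r \<Longrightarrow> cur (LI (P i)) s = curv i r"
proof -
  assume i: "i \<le> h" and f: "fst s = incv i r"
  show ?thesis
  proof (cases "i = 0")
    case True then show ?thesis using src_P[OF i] by (simp add: cur_def curv_def code_def)
  next
    case False
    then obtain k where k: "i = Suc k" by (cases i) auto
    show ?thesis
    proof (cases "mk i")
      case True
      then show ?thesis using src_P[OF i] mkd_P[OF i] False k by (simp add: cur_def curv_def code_def)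
    next
      case nm: False
      then show ?thesis using src_P[OF i] mkd_P[OF i] False k f
        by (simp add: cur_def curv_def incv_def)
    qed
  qed
qed

lemma curv_bound: "i \<le> h \<Longrightarrow> curv i r = Some (a, b, d) \<Longrightarrow> a < N \<and> b < N \<and> d < N"
proof -
  assume i: "i \<le> h" and c: "curv i r = Some (a, b, d)"
  then have e: "a = code (jj i)" "b = i - jj i" "d = pw i - pw (jj i)"
    unfolding curv_def by (auto split: if_splits)
  have "jj i \<le> h" using jj_le[of i] i by simp
  then show ?thesis using e code_lt pw_lt[OF i] h_lt N_big(2) i by fastforce
qed

lemma phaseA: "r \<le> L \<Longrightarrow> (\<forall>i\<le>h. fst (S r (P i)) = incv i r) \<and>
   (\<forall>v<n. v \<notin> set ps \<longrightarrow> fst (S r v) = None) \<and> (\<forall>v. snd (S r v) = ({}, {}))"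
proof (induction r)
  case 0
  have "0 < i \<Longrightarrow> \<not> (i - jj (i - 1) \<le> 0)" for i using jj_le[of "i - 1"] by auto
  then show ?case by (auto simp: S_0 incv_def)
next
  case (Suc r)
  then have rL: "r < L" by simp
  have IH: "\<forall>i\<le>h. fst (S r (P i)) = incv i r" "\<forall>v<n. v \<notin> set ps \<longrightarrow> fst (S r v) = None"
    "\<forall>v. snd (S r v) = ({}, {})"
    using Suc by auto
  have A: "fst (S (Suc r) (P i)) = incv i (Suc r)" if i: "i \<le> h" for i
  proof (cases "i = 0")
    case True
    then show ?thesis using IH(1) i has_pred_P[OF i] rL
      by (simp add: S_Suc STEP_def incv_def)
  next
    case False
    then obtain k where k: "i = Suc k" by (cases i) auto
    have kh: "k < h" using i k by simp
    have pr: "predi (LI (P i)) = rec (P i) (P k)" using predi_P[OF _ i] k by simp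
    have ad: "adj w (P k) (P i)" using edge[OF kh] k by (simp add: adj_def)
    have ib: "IB r (P i) (ident (P k)) = ASEND (LI (P k)) (S r (P k)) r (ident (P i))"
      using IB_at[OF P_lt[of k] ad] kh by simp
    have cu: "cur (LI (P k)) (S r (P k)) = curv k r"
      using cur_from_inc[of k "S r (P k)" r] IH(1) kh by simp
    have sn: "SEND (LI (P k)) (S r (P k)) r (ident (P i)) = map_option (encA N) (curv k r)"
      using rL has_succ_P[of k] kh succi_P[OF kh] cu k by (simp add: SEND_def rec_def)
    have as: "ASEND (LI (P k)) (S r (P k)) r (ident (P i)) = map_option (encA N) (curv k r)"
    proof (cases "curv k r")
      case (Some x)
      then obtain a b d where x: "x = (a, b, d)" by (cases x) auto
      have "a < N \<and> b < N \<and> d < N" using curv_bound[of k r a b d] kh Some x by simp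
      then have "encA N x < max 2 n ^ BB" using encA_lt N3_le x by (meson less_le_trans)
      then show ?thesis using sn Some by (simp add: ASEND_def)
    qed (simp add: ASEND_def sn)
    have jk: "jj k \<le> k" by (rule jj_le)
    show ?thesis
    proof (cases "curv k r")
      case None
      then have "\<not> (Suc k - jj k \<le> Suc r)" unfolding curv_def by (auto split: if_splits)
      then show ?thesis using None as ib pr IH(1) i k rL has_pred_P[OF i]
        by (simp add: S_Suc STEP_def incv_def rec_def)
    next
      case (Some x)
      then have c: "k - jj k \<le> r" "x = (code (jj k), k - jj k, pw k - pw (jj k))"
        unfolding curv_def by (auto split: if_splits)
      have bd: "code (jj k) < N" "k - jj k < N"
        using code_lt[of "jj k"] jk kh h_lt N_big(2) by auto
      have pwk: "pw (jj k) \<le> pw k" using pw_mono[OF jk] .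
      have "fst (S (Suc r) (P i)) = Some (code (jj k), Suc (k - jj k), pw k - pw (jj k) + ew k)"
        using as ib pr i k rL has_pred_P[OF i] Some c decA_encA[OF bd]
        by (simp add: S_Suc STEP_def rec_def ew_def)
      also have "\<dots> = incv i (Suc r)"
        using c(1) jk pwk k by (simp add: incv_def pw_Suc Suc_diff_le)
      finally show ?thesis .
    qed
  qed
  have B: "fst (S (Suc r) v) = None" if "v < n" "v \<notin> set ps" for v
    using IH(2) that nonpath[OF that(2)] rL by (simp add: S_Suc STEP_def)
  have C: "snd (S (Suc r) v) = ({}, {})" for v
    using IH(3) rL by (simp add: S_Suc STEP_def)
  show ?case using A B C by blast
qed

end

context inst begin

lemma STEP_B: "\<not> r < Lf (li_n inp) \<Longrightarrow> fst (STEP inp s r ib) = fst s"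
  unfolding STEP_def by (simp only: if_False fst_conv)
lemma STEP_B1: "\<not> r < Lf (li_n inp) \<Longrightarrow> fst (snd (STEP inp s r ib)) = fst (snd s) \<union> {m. \<exists>j. ib j = Some m}"
  unfolding STEP_def by (simp only: if_False fst_conv snd_conv)
lemma STEP_B2: "\<not> r < Lf (li_n inp) \<Longrightarrow> snd (snd (STEP inp s r ib)) = snd (snd s) \<union> (if cand inp s = {} then {} else {Min (cand inp s)})"
  unfolding STEP_def by (simp only: if_False fst_conv snd_conv)

lemma fst_stable: "L \<le> r \<Longrightarrow> fst (S r v) = fst (S L v)"
proof (induction r rule: dec_induct)
  case (step r) 
  have "fst (S (Suc r) v) = fst (S r v)" unfolding S_Suc apply (rule STEP_B) using step by simp
  then show ?case using step by simp
qed simp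

lemma item_stable: "L \<le> r \<Longrightarrow> item (LI v) (S r v) = item (LI v) (S L v)"
proof -
  assume "L \<le> r"
  then have "fst (S r v) = fst (S L v)" by (rule fst_stable)
  then show ?thesis unfolding item_def by simp
qed

definition KK where "KK t u = known (LI u) (S (L + t) u)"
definition BS where "BS t u = snd (snd (S (L + t) u))"
definition SF where "SF t u = (if KK t u - BS t u = {} then None else Some (Min (KK t u - BS t u)))"
definition AllI where "AllI = (\<Union>u\<in>{..<n}. item (LI u) (S L u))"

definition itv :: "nat \<Rightarrow> nat" where
  "itv i = encI N (code (jj (i - 1))) (i - jj (i - 1)) (pw i - pw (jj (i - 1))) (code i) (if i = h then 1 else 0)"
definition TI where "TI = {itv i | i. 0 < i \<and> i \<le> h \<and> (mk i \<or> i = h)}"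

lemma item_P: "i \<le> h \<Longrightarrow> item (LI (P i)) (S L (P i)) =
   (if 0 < i \<and> (mk i \<or> i = h) \<and> i - jj (i - 1) \<le> L then {itv i} else {})"
  using phaseA[of L] src_P[of i] tgt_P[of i] mkd_P[of i]
  by (auto simp: item_def incv_def itv_def code_def)

lemma item_nonpath: "v < n \<Longrightarrow> v \<notin> set ps \<Longrightarrow> item (LI v) (S L v) = {}"
  using phaseA[of L] nonpath[of v] by (auto simp: item_def)

lemma AllI_sub: "AllI \<subseteq> TI"
proof
  fix x assume "x \<in> AllI"
  then obtain u where u: "u < n" "x \<in> item (LI u) (S L u)" unfolding AllI_def by auto
  show "x \<in> TI"
  proof (cases "u \<in> set ps")
    case True
    then obtain i where i: "i \<le> h" "u = P i" using in_path by auto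
    then show ?thesis using u item_P[OF i(1)] unfolding TI_def by (auto split: if_splits)
  next
    case False then show ?thesis using u item_nonpath by auto
  qed
qed

lemma TI_fin: "finite TI"
proof -
  have "TI \<subseteq> itv ` {..h}" unfolding TI_def by auto
  then show ?thesis using finite_subset by blast
qed

lemma AllI_fin: "finite AllI" using AllI_sub TI_fin finite_subset by blast

lemma itv_lt: "0 < i \<Longrightarrow> i \<le> h \<Longrightarrow> itv i < N ^ 5"
proof -
  assume i: "0 < i" "i \<le> h"
  have j: "jj (i - 1) \<le> h" using jj_le[of "i - 1"] i by simp
  have a: "code (jj (i - 1)) < N" using code_lt[OF j] .
  have b: "i - jj (i - 1) < N" using i h_lt N_big(2) by simp
  have d: "pw i - pw (jj (i - 1)) < N" using pw_lt[OF i(2)] by simp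
  have e: "code i < N" using code_lt[OF i(2)] .
  have f: "(if i = h then 1 else 0) < N" using N_big(2) n2 by simp
  have gen: "a' < N \<Longrightarrow> b' < N \<Longrightarrow> d' < N \<Longrightarrow> e' < N \<Longrightarrow> f' < N \<Longrightarrow> encI N a' b' d' e' f' < N ^ 5"
    for a' b' d' e' f'
  proof -
    assume as: "a' < N" "b' < N" "d' < N" "e' < N" "f' < N"
    have mx: "x < N \<Longrightarrow> y < N ^ k \<Longrightarrow> x + N * y < N ^ Suc k" for x y k
    proof -
      assume "x < N" "y < N ^ k"
      then have "x + N * y < N + N * y" "N + N * y = N * Suc y" "Suc y \<le> N ^ k" by auto
      then have "N * Suc y \<le> N * N ^ k" by (intro mult_le_mono2)
      then show ?thesis using \<open>x + N * y < N + N * y\<close> \<open>N + N * y = N * Suc y\<close>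
        unfolding power_Suc by linarith
    qed
    show ?thesis unfolding encI_def
      using mx[OF as(1) mx[OF as(2) mx[OF as(3) mx[OF as(4), of f' 1]]]] as(5)
      by (simp add: eval_nat_numeral)
  qed
  show ?thesis unfolding itv_def using gen[OF a b d e f] .
qed

lemma N5_le: "N ^ 5 \<le> max 2 n ^ BB"
proof -
  have "max 2 n = n" using n2 by simp
  moreover have "N ^ 5 = n ^ ((W + I + 2) * 5)" by (simp only: NB_def power_mult)
  moreover have "n ^ ((W + I + 2) * 5) \<le> n ^ BB" unfolding BB_def
    using n2 by (intro power_increasing) auto
  ultimately show ?thesis by simp
qed

lemma TI_bound: "x \<in> TI \<Longrightarrow> x < max 2 n ^ BB"
  unfolding TI_def using itv_lt N5_le by (auto intro: less_le_trans)

lemma KK_split: "KK t u = item (LI u) (S L u) \<union> fst (snd (S (L + t) u))"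
  unfolding KK_def known_def using item_stable[of "L + t" u] by simp

lemma send_B: "SEND (LI u) (S (L + t) u) (L + t) j = SF t u"
  unfolding SEND_def SF_def cand_def KK_def BS_def by simp

lemma KI_inv: "\<forall>u<n. KK t u \<subseteq> AllI"
proof (induction t)
  case 0
  then show ?case unfolding KK_split using phaseA[of L] AllI_def by auto
next
  case (Suc t)
  show ?case
  proof (intro allI impI)
    fix u assume u: "u < n"
    have "fst (snd (S (L + Suc t) u)) = fst (snd (S (L + t) u)) \<union> {m. \<exists>j. IB (L + t) u j = Some m}"
      unfolding add_Suc_right S_Suc by (rule STEP_B1) simp
    moreover have "m \<in> AllI" if "IB (L + t) u j = Some m" for j m
    proof -
      note ib = that
      obtain u' where u': "u' < n" "ASEND (LI u') (S (L + t) u') (L + t) (ident u) = Some m"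
        using IB_some[OF ib] by auto
      then have "SF t u' = Some m" using send_B by (auto simp: ASEND_def split: option.splits if_splits)
      have "KK t u' \<subseteq> AllI" using Suc u'(1) by blast
      then have fin: "finite (KK t u' - BS t u')" using AllI_fin finite_subset by blast
      then have "m \<in> KK t u'" using \<open>SF t u' = Some m\<close> unfolding SF_def using Min_in[OF fin]
        by (auto split: if_splits)
      then show ?thesis using Suc u' by auto
    qed
    moreover have "fst (snd (S (L + t) u)) \<subseteq> AllI" using Suc u KK_split by auto
    moreover have "item (LI u) (S L u) \<subseteq> AllI" using u AllI_def by auto
    ultimately show "KK (Suc t) u \<subseteq> AllI" unfolding KK_split by auto
  qed
qed

lemma fl_Bstep: "BS (Suc t) u = BS t u \<union> set_option (SF t u)"
proof -
  have "snd (snd (S (L + Suc t) u)) = snd (snd (S (L + t) u)) \<union> (if cand (LI u) (S (L + t) u) = {} then {} else {Min (cand (LI u) (S (L + t) u))})"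
    unfolding add_Suc_right S_Suc by (rule STEP_B2) simp
  then show ?thesis by (simp add: BS_def SF_def cand_def KK_def)
qed

lemma fl_Kstep: "u < n \<Longrightarrow> KK t u \<union> {x. \<exists>w'\<in>{..<n}. adj w w' u \<and> SF t w' = Some x} \<subseteq> KK (Suc t) u"
proof -
  assume u: "u < n"
  have f: "fst (snd (S (L + Suc t) u)) = fst (snd (S (L + t) u)) \<union> {m. \<exists>j. IB (L + t) u j = Some m}"
    unfolding add_Suc_right S_Suc by (rule STEP_B1) simp
  have "x \<in> KK (Suc t) u" if a: "w' < n" "adj w w' u" "SF t w' = Some x" for w' x
  proof -
    have "KK t w' \<subseteq> AllI" using KI_inv a(1) by blast
    then have fin: "finite (KK t w' - BS t w')" using AllI_fin finite_subset by blast
    have "x \<in> KK t w'" using a(3) Min_in[OF fin] unfolding SF_def by (auto split: if_splits)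
    then have "x \<in> TI" using KI_inv AllI_sub a by blast
    then have "ASEND (LI w') (S (L + t) w') (L + t) (ident u) = Some x"
      using TI_bound send_B a by (simp add: ASEND_def)
    then have "IB (L + t) u (ident w') = Some x" using IB_at a by simp
    then show ?thesis using f KK_split by auto
  qed
  then show ?thesis using f KK_split by auto
qed

lemma flood_ok: "flood {..<n} (adj w) KK BS SF AllI"
  unfolding flood_def using AllI_fin KI_inv phaseA[of L] fl_Bstep fl_Kstep
  by (auto simp: BS_def SF_def)

end

context inst begin

interpretation F: flood "{..<n}" "adj w" KK BS SF AllI by (rule flood_ok)

lemma R_mono: "F.R x d \<subseteq> F.R x (d + e)"
  by (induction e) auto

lemma walk_R: "is_uwalk w xs \<Longrightarrow> hd xs \<in> F.R x 0 \<Longrightarrow> k < length xs \<Longrightarrow> xs ! k \<in> F.R x k"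
proof (induction k)
  case 0 then show ?case by (simp add: hd_conv_nth is_uwalk_def)
next
  case (Suc k)
  then have a: "adj w (xs ! k) (xs ! Suc k)" unfolding is_uwalk_def by auto
  then have "xs ! Suc k < n" using adj_lt by auto
  then show ?case using Suc a by auto
qed

definition D where "D = diam n w"

lemma hop_le: "u < n \<Longrightarrow> v < n \<Longrightarrow> hop w u v \<le> D"
proof -
  assume uv: "u < n" "v < n"
  have "finite {hop w u v | u v. u < n \<and> v < n}"
  proof -
    have "{hop w u v | u v. u < n \<and> v < n} = (\<lambda>(u, v). hop w u v) ` ({..<n} \<times> {..<n})" by auto
    then show ?thesis by simp
  qed
  then show ?thesis unfolding D_def diam_def using uv by (intro Max_ge) auto
qed

lemma hop_walk: "u < n \<Longrightarrow> v < n \<Longrightarrow> \<exists>xs. is_uwalk w xs \<and> hd xs = u \<and> last xs = v \<and> length xs = Suc (hop w u v)"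
proof -
  assume uv: "u < n" "v < n"
  obtain xs where xs: "is_uwalk w xs" "hd xs = u" "last xs = v" using conn[OF uv] by blast
  then have "xs \<noteq> []" by (simp add: is_uwalk_def)
  then have "\<exists>k xs. is_uwalk w xs \<and> hd xs = u \<and> last xs = v \<and> length xs = Suc k"
    using xs by (intro exI[of _ "length xs - 1"] exI[of _ xs]) auto
  then show ?thesis unfolding hop_def by (rule LeastI_ex)
qed

lemma KK_mono: "t \<le> t' \<Longrightarrow> u < n \<Longrightarrow> KK t u \<subseteq> KK t' u"
proof (induction t' rule: dec_induct)
  case (step m) then show ?case using F.Kstep[of u m] by auto
qed simp

lemma all_known: "u < n \<Longrightarrow> KK (D + card AllI) u = AllI"
proof
  assume u: "u < n"
  show "KK (D + card AllI) u \<subseteq> AllI" using F.KI u by auto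
  show "AllI \<subseteq> KK (D + card AllI) u"
  proof
    fix x assume x: "x \<in> AllI"
    then obtain v0 where v0: "v0 < n" "x \<in> item (LI v0) (S L v0)" unfolding AllI_def by auto
    then have "v0 \<in> F.R x 0" using KK_split by auto
    obtain xs where xs: "is_uwalk w xs" "hd xs = v0" "last xs = u" "length xs = Suc (hop w v0 u)"
      using hop_walk[OF v0(1) u] by auto
    have "xs \<noteq> []" using xs(4) by auto
    then have "last xs = xs ! hop w v0 u" using xs(4) last_conv_nth[of xs] by auto
    moreover have "xs ! hop w v0 u \<in> F.R x (hop w v0 u)"
      using walk_R[OF xs(1), of x "hop w v0 u"] xs \<open>v0 \<in> F.R x 0\<close> by simp
    ultimately have "u \<in> F.R x (hop w v0 u)" using xs(3) by simp
    then have "u \<in> F.R x D" using R_mono[of x "hop w v0 u" "D - hop w v0 u"] hop_le[OF v0(1) u] by auto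
    then have k: "x \<in> KK (D + card {y \<in> AllI. y < x}) u" using F.flood_done x by blast
    have "card {y \<in> AllI. y < x} \<le> card AllI" using AllI_fin by (intro card_mono) auto
    then show "x \<in> KK (D + card AllI) u" using KK_mono[OF _ u, of "D + card {y \<in> AllI. y < x}" "D + card AllI"] k
      by auto
  qed
qed

end

context inst begin

definition J :: "nat \<Rightarrow> bool" where "J i \<longleftrightarrow> 0 < i \<and> i \<le> h \<and> (mk i \<or> i = h)"

lemma TI_J: "TI = itv ` {i. J i}" unfolding TI_def J_def by auto

lemma itv_fields:
  assumes i: "0 < i" "i \<le> h"
  shows "fA N (itv i) = code (jj (i - 1))" "fB N (itv i) = i - jj (i - 1)"
    "fC N (itv i) = pw i - pw (jj (i - 1))" "fE N (itv i) = code i" "fF N (itv i) = (if i = h then 1 else 0)"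
proof -
  have j: "jj (i - 1) \<le> h" using jj_le[of "i - 1"] i by simp
  have a: "code (jj (i - 1)) < N" using code_lt[OF j] .
  have b: "i - jj (i - 1) < N" using i h_lt N_big(2) by simp
  have d: "pw i - pw (jj (i - 1)) < N" using pw_lt[OF i(2)] by simp
  have e: "code i < N" using code_lt[OF i(2)] .
  show "fA N (itv i) = code (jj (i - 1))" "fB N (itv i) = i - jj (i - 1)"
    "fC N (itv i) = pw i - pw (jj (i - 1))" "fE N (itv i) = code i" "fF N (itv i) = (if i = h then 1 else 0)"
    unfolding itv_def using fields_encI[OF a b d e] by simp_all
qed

lemma code_inj: "j \<le> h \<Longrightarrow> j' \<le> h \<Longrightarrow> code j = code j' \<longleftrightarrow> j = j'"
proof -
  assume j: "j \<le> h" "j' \<le> h"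
  have "ident (P j) = ident (P j') \<Longrightarrow> j = j'"
    using injid P_lt[OF j(1)] P_lt[OF j(2)] P_inj[OF j] unfolding inj_on_def by auto
  then show ?thesis unfolding code_def by auto
qed

lemma code_0: "code j = 0 \<longleftrightarrow> j = 0" by (simp add: code_def)

lemma TI_E: "y \<in> TI \<Longrightarrow> 0 < j \<Longrightarrow> j \<le> h \<Longrightarrow> fE N y = code j \<Longrightarrow> y = itv j \<and> J j"
proof -
  assume y: "y \<in> TI" "0 < j" "j \<le> h" "fE N y = code j"
  then obtain i where i: "J i" "y = itv i" using TI_J by auto
  then have i0: "0 < i" "i \<le> h" unfolding J_def by auto
  have "fE N (itv i) = code i" using itv_fields(4)[OF i0] .
  then have "code i = code j" using i(2) y(4) by simp
  then have "i = j" using code_inj[OF i0(2) y(3)] by simp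
  then show ?thesis using i by simp
qed

lemma TI_F: "y \<in> TI \<Longrightarrow> fF N y = 1 \<Longrightarrow> y = itv h \<and> J h"
proof -
  assume y: "y \<in> TI" "fF N y = 1"
  then obtain i where i: "J i" "y = itv i" using TI_J by auto
  then have i0: "0 < i" "i \<le> h" unfolding J_def by auto
  have "fF N (itv i) = (if i = h then 1 else 0)" using itv_fields(5)[OF i0] .
  moreover have "fF N (itv i) = 1" using i(2) y(2) by simp
  ultimately have "(if i = h then 1 else 0) = (1::nat)" by simp
  then have "i = h" by (cases "i = h") auto
  then show ?thesis using i by simp
qed

lemma jj_eq: "mk j \<Longrightarrow> j \<le> i \<Longrightarrow> (\<forall>k. j < k \<and> k \<le> i \<longrightarrow> \<not> mk k) \<Longrightarrow> jj i = j"
proof (induction i)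
  case 0 then show ?case by simp
next
  case (Suc i)
  show ?case
  proof (cases "j = Suc i")
    case True then show ?thesis using Suc by simp
  next
    case False then show ?thesis using Suc by auto
  qed
qed

lemma closed_full: "K \<subseteq> TI \<Longrightarrow> closedK N K \<Longrightarrow> TI \<subseteq> K"
proof -
  assume K: "K \<subseteq> TI" "closedK N K"
  obtain y where y: "y \<in> K" "fF N y = 1" using K(2) unfolding closedK_def by auto
  then have yh: "y = itv h" "J h" using TI_F K(1) by auto
  have "J i \<Longrightarrow> itv i \<in> K" for i
  proof (induction "h - i" arbitrary: i rule: less_induct)
    case less
    show ?case
    proof (cases "i = h")
      case True then show ?thesis using y yh by simp
    next
      case False
      then have ih: "i < h" "mk i" "0 < i" using less.prems J_def by auto
      define i' where "i' = (LEAST k. i < k \<and> J k)"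
      have ex: "i < h \<and> J h" using ih yh by simp
      have i': "i < i'" "J i'" using LeastI[of "\<lambda>k. i < k \<and> J k", OF ex] i'_def by auto
      have i'h: "i' \<le> h" using i' J_def by auto
      have nomk: "\<forall>k. i < k \<and> k \<le> i' - 1 \<longrightarrow> \<not> mk k"
      proof (intro allI impI)
        fix k assume k: "i < k \<and> k \<le> i' - 1"
        then have "k < i'" using i'(1) by linarith
        then have "\<not> (i < k \<and> J k)" unfolding i'_def by (rule not_less_Least)
        then have "\<not> J k" using k by blast
        have "0 < k" "k \<le> h" "k \<noteq> h" using k ih(3) i'h \<open>k < i'\<close> by auto
        then show "\<not> mk k" using \<open>\<not> J k\<close> unfolding J_def by blast
      qed
      have jj': "jj (i' - 1) = i" using jj_eq[OF ih(2) _ nomk] i' by auto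
      have "itv i' \<in> K" using less.hyps[of i'] i' i'h by auto
      then have "fA N (itv i') = 0 \<or> (\<exists>z\<in>K. fE N z = fA N (itv i'))" using K(2) unfolding closedK_def by auto
      moreover have "fA N (itv i') = code i" using itv_fields(1)[of i'] jj' i' i'h by auto
      ultimately obtain z where z: "z \<in> K" "fE N z = code i" using code_0 ih by auto
      then show ?thesis using TI_E[of z i] K(1) ih by auto
    qed
  qed
  then show ?thesis using TI_J by auto
qed

lemma PRE_TI: "mk j \<Longrightarrow> j \<le> h \<Longrightarrow> j \<le> f \<Longrightarrow> PRE N TI f (code j) = (j, pw j)"
proof (induction j arbitrary: f rule: less_induct)
  case (less j)
  show ?case
  proof (cases "j = 0")
    case True then show ?thesis by (cases f) (auto simp: code_def pw_def)
  next
    case False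
    then obtain f' where f: "f = Suc f'" using less.prems by (cases f) auto
    have Jj: "J j" using less.prems False J_def by auto
    have itvj: "itv j \<in> TI" using Jj TI_J by auto
    have sel: "(SOME y. y \<in> TI \<and> fE N y = code j) = itv j"
    proof (rule some_equality)
      show "itv j \<in> TI \<and> fE N (itv j) = code j" using itvj itv_fields(4)[of j] Jj J_def by auto
      show "y \<in> TI \<and> fE N y = code j \<Longrightarrow> y = itv j" for y using TI_E[of y j] False less.prems by auto
    qed
    have jl: "jj (j - 1) < j" using jj_le[of "j - 1"] False by simp
    have ih: "PRE N TI f' (code (jj (j - 1))) = (jj (j - 1), pw (jj (j - 1)))"
      using less.IH[OF jl] jj_mk[of "j - 1"] jl less.prems f by auto
    have pm: "pw (jj (j - 1)) \<le> pw j" using pw_mono jl by simp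
    show ?thesis using f False sel ih itv_fields[of j] Jj J_def jl pm code_0
      by (auto simp: Let_def)
  qed
qed

lemma TOT_TI: "0 < h \<Longrightarrow> h \<le> f \<Longrightarrow> TOT N TI f = (h, pw h)"
proof -
  assume h: "0 < h" "h \<le> f"
  have Jh: "J h" using h J_def by auto
  have sel: "(SOME y. y \<in> TI \<and> fF N y = 1) = itv h"
  proof (rule some_equality)
    show "itv h \<in> TI \<and> fF N (itv h) = 1" using Jh TI_J itv_fields(5)[of h] h by auto
    show "y \<in> TI \<and> fF N y = 1 \<Longrightarrow> y = itv h" for y using TI_F by auto
  qed
  have jl: "jj (h - 1) < h" using jj_le[of "h - 1"] h by simp
  have ih: "PRE N TI f (code (jj (h - 1))) = (jj (h - 1), pw (jj (h - 1)))"
    using PRE_TI[of "jj (h - 1)" f] jj_mk[of "h - 1"] jl h by auto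
  have pm: "pw (jj (h - 1)) \<le> pw h" using pw_mono jl by simp
  have e1: "jj (h - 1) + (h - jj (h - 1)) = h" using jl by simp
  have e2: "pw (jj (h - 1)) + (pw h - pw (jj (h - 1))) = pw h" using pm by simp
  show ?thesis unfolding TOT_def Let_def sel
    using ih itv_fields(1,2,3)[OF h(1) order.refl] e1 e2 by simp
qed

lemma known_KK: "L \<le> r \<Longrightarrow> known (LI v) (S r v) = KK (r - L) v"
  unfolding KK_def by simp

lemma cur_L: "i \<le> h \<Longrightarrow> L \<le> r \<Longrightarrow> cur (LI (P i)) (S r (P i)) = curv i L"
proof -
  assume i: "i \<le> h" and r: "L \<le> r"
  have "fst (S r (P i)) = incv i L" using fst_stable[OF r] phaseA[of L] i by simp
  then show ?thesis using cur_from_inc[OF i] by simp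
qed

lemma out_correct:
  assumes i: "i \<le> h" and o: "OUT (LI (P i)) (S r (P i)) r = Some x"
  shows "x = (i, pw i, pw h - pw i)"
proof (cases "h = 0")
  case True
  then have "i = 0" using i by simp
  then show ?thesis using o src_P[OF i] tgt_P[OF i] True by (simp add: OUT_def pw_def)
next
  case False
  have hp: "\<not> (P i \<noteq> hd ps \<and> \<not> has_pred (LI (P i)))" using src_P[OF i] has_pred_P[OF i] by auto
  have st: "\<not> (P i = hd ps \<and> P i = last ps)" using src_P[OF i] tgt_P[OF i] False by auto
  have c: "L \<le> r" "closedK N (known (LI (P i)) (S r (P i)))" "cur (LI (P i)) (S r (P i)) \<noteq> None"
    using o hp st unfolding OUT_def by (auto split: if_splits)
  have Ksub: "known (LI (P i)) (S r (P i)) \<subseteq> TI"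
    using known_KK[OF c(1)] KI_inv P_lt[OF i] AllI_sub by blast
  have KT: "known (LI (P i)) (S r (P i)) = TI" using closed_full[OF Ksub c(2)] Ksub by auto
  have cu: "cur (LI (P i)) (S r (P i)) = Some (code (jj i), i - jj i, pw i - pw (jj i))"
    using cur_L[OF i c(1)] c(3) by (auto simp: curv_def split: if_splits)
  have ji: "jj i \<le> i" by (rule jj_le)
  have pre: "PRE N TI n (code (jj i)) = (jj i, pw (jj i))"
    using PRE_TI[of "jj i" n] jj_mk ji i h_lt by auto
  have tot: "TOT N TI n = (h, pw h)" using TOT_TI False h_lt by auto
  have pm: "pw (jj i) \<le> pw i" using pw_mono ji .
  have "OUT (LI (P i)) (S r (P i)) r = (case cur (LI (P i)) (S r (P i)) of Some (a, b, d) \<Rightarrow>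
          (let N = NB n; K = known (LI (P i)) (S r (P i)); p = PRE N K n a; tt = TOT N K n in
           Some (fst p + b, snd p + d, snd tt - (snd p + d))))"
    using hp st c unfolding OUT_def li_simps by (simp only: if_False if_True simp_thms)
  also have "\<dots> = Some (jj i + (i - jj i), pw (jj i) + (pw i - pw (jj i)), pw h - (pw (jj i) + (pw i - pw (jj i))))"
    unfolding cu KT Let_def using pre tot by simp
  finally show ?thesis using o ji pm by simp
qed

definition G1 where "G1 \<longleftrightarrow> (\<forall>i. 0 < i \<and> i \<le> h \<longrightarrow> i - jj (i - 1) \<le> L)"

lemma AllI_eq: "G1 \<Longrightarrow> AllI = TI"
proof
  assume g: G1
  show "AllI \<subseteq> TI" by (rule AllI_sub)
  show "TI \<subseteq> AllI"
  proof
    fix x assume "x \<in> TI"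
    then obtain i where i: "J i" "x = itv i" using TI_J by auto
    then have "item (LI (P i)) (S L (P i)) = {itv i}" using item_P[of i] g J_def G1_def by auto
    then show "x \<in> AllI" unfolding AllI_def using i P_lt J_def by auto
  qed
qed

lemma closed_TI: "0 < h \<Longrightarrow> closedK N TI"
proof -
  assume h: "0 < h"
  have Jh: "J h" using h by (simp add: J_def)
  have "fF N (itv h) = 1" using itv_fields(5)[OF h order.refl] by simp
  moreover have "itv h \<in> TI" using Jh TI_J by blast
  ultimately have a: "\<exists>y\<in>TI. fF N y = 1" by blast
  have "fA N y = 0 \<or> (\<exists>z\<in>TI. fE N z = fA N y)" if y: "y \<in> TI" for y
  proof -
    obtain i where i: "J i" "y = itv i" using y TI_J by auto
    then have i0: "0 < i" "i \<le> h" unfolding J_def by auto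
    have fa: "fA N y = code (jj (i - 1))" using itv_fields(1)[OF i0] i(2) by simp
    show ?thesis
    proof (cases "jj (i - 1) = 0")
      case True then show ?thesis using fa by (simp add: code_def)
    next
      case False
      have j0: "0 < jj (i - 1)" "jj (i - 1) \<le> h" using False jj_le[of "i - 1"] i0 by auto
      have "J (jj (i - 1))" using j0 jj_mk[of "i - 1"] unfolding J_def by blast
      then have "itv (jj (i - 1)) \<in> TI" using TI_J by blast
      moreover have "fE N (itv (jj (i - 1))) = fA N y" using itv_fields(4)[OF j0] fa by simp
      ultimately show ?thesis by blast
    qed
  qed
  then show ?thesis using a unfolding closedK_def by auto
qed

lemma out_some:
  assumes g: G1 and i: "i \<le> h" and r: "L + D + card AllI \<le> r"
  shows "OUT (LI (P i)) (S r (P i)) r \<noteq> None"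
proof (cases "h = 0")
  case True
  then have "i = 0" using i by simp
  then show ?thesis using src_P[OF i] tgt_P[OF i] True by (simp add: OUT_def)
next
  case False
  have Lr: "L \<le> r" using r by simp
  have "known (LI (P i)) (S r (P i)) = KK (r - L) (P i)" using known_KK[OF Lr] .
  also have "\<dots> = AllI"
  proof
    show "KK (r - L) (P i) \<subseteq> AllI" using KI_inv P_lt[OF i] by auto
    show "AllI \<subseteq> KK (r - L) (P i)" using all_known[OF P_lt[OF i]] KK_mono[of "D + card AllI" "r - L" "P i"] r P_lt[OF i]
      by auto
  qed
  finally have K: "known (LI (P i)) (S r (P i)) = TI" using AllI_eq[OF g] by simp
  have "i - jj i \<le> L"
  proof (cases "mk i \<or> i = 0")
    case True then show ?thesis
      by (cases i) auto
  next
    case False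
    then have "jj i = jj (i - 1)" by (cases i) auto
    then show ?thesis using g False i G1_def by auto
  qed
  then have cu: "cur (LI (P i)) (S r (P i)) \<noteq> None" using cur_L[OF i Lr] by (simp add: curv_def)
  have hp: "\<not> (P i \<noteq> hd ps \<and> \<not> has_pred (LI (P i)))" using src_P[OF i] has_pred_P[OF i] by auto
  have st: "\<not> (P i = hd ps \<and> P i = last ps)" using src_P[OF i] tgt_P[OF i] False by auto
  show ?thesis using hp st Lr K closed_TI[of] False cu unfolding OUT_def
    by (auto split: option.splits simp: Let_def)
qed

end

lemma ww_cons: "walk_weight w (x # y # zs) = the (w x y) + walk_weight w (y # zs)"
  unfolding walk_weight_def by (simp add: sum.lessThan_Suc_shift del: sum.lessThan_Suc)

lemma ww_single: "walk_weight w [x] = 0" by (simp add: walk_weight_def)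

lemma iw_cons: "is_walk w (x # y # zs) \<longleftrightarrow> w x y \<noteq> None \<and> is_walk w (y # zs)"
proof -
  have "(\<forall>i. Suc i < length (x # y # zs) \<longrightarrow> w ((x # y # zs) ! i) ((x # y # zs) ! Suc i) \<noteq> None) \<longleftrightarrow>
        w x y \<noteq> None \<and> (\<forall>i. Suc i < length (y # zs) \<longrightarrow> w ((y # zs) ! i) ((y # zs) ! Suc i) \<noteq> None)"
    (is "?l \<longleftrightarrow> ?r")
  proof
    assume l: ?l
    have "w x y \<noteq> None" using l[rule_format, of 0] by simp
    moreover have "Suc i < length (y # zs) \<Longrightarrow> w ((y # zs) ! i) ((y # zs) ! Suc i) \<noteq> None" for i
      using l[rule_format, of "Suc i"] by simp
    ultimately show ?r by blast
  next
    assume r: ?r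
    show ?l
    proof (intro allI impI)
      fix i assume i: "Suc i < length (x # y # zs)"
      show "w ((x # y # zs) ! i) ((x # y # zs) ! Suc i) \<noteq> None"
      proof (cases i)
        case 0 then show ?thesis using r by simp
      next
        case (Suc j) then show ?thesis using r i by auto
      qed
    qed
  qed
  then show ?thesis unfolding is_walk_def by simp
qed

lemma iw_single: "is_walk w [x]" by (simp add: is_walk_def)

lemma walk_concat: "is_walk w xs \<Longrightarrow> is_walk w ys \<Longrightarrow> last xs = hd ys \<Longrightarrow>
   is_walk w (xs @ tl ys) \<and> walk_weight w (xs @ tl ys) = walk_weight w xs + walk_weight w ys \<and>
   hd (xs @ tl ys) = hd xs \<and> last (xs @ tl ys) = last ys"
proof (induction xs rule: induct_list012)
  case 1 then show ?case by (simp add: is_walk_def)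
next
  case (2 x)
  then have "ys = x # tl ys" using 2 by (cases ys) (auto simp: is_walk_def)
  then show ?case using 2 ww_single[of w x] by (metis append_Cons append_Nil add_0 hd_Cons_tl list.sel(1))
next
  case (3 x y zs)
  have iw: "is_walk w (y # zs)" "w x y \<noteq> None" using 3(3) iw_cons by auto
  have ih: "is_walk w ((y # zs) @ tl ys) \<and> walk_weight w ((y # zs) @ tl ys) = walk_weight w (y # zs) + walk_weight w ys \<and>
   hd ((y # zs) @ tl ys) = hd (y # zs) \<and> last ((y # zs) @ tl ys) = last ys"
    using 3 iw by simp
  have e: "(x # y # zs) @ tl ys = x # y # (zs @ tl ys)" by simp
  show ?case unfolding e using ih iw
    by (auto simp: iw_cons ww_cons)
qed

lemma dist_le: "is_walk w xs \<Longrightarrow> dist w (hd xs) (last xs) \<le> walk_weight w xs"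
  unfolding dist_def by (rule Least_le) blast

lemma dist_ach: "is_walk w xs \<Longrightarrow> hd xs = u \<Longrightarrow> last xs = v \<Longrightarrow>
  \<exists>ys. is_walk w ys \<and> hd ys = u \<and> last ys = v \<and> walk_weight w ys = dist w u v"
  unfolding dist_def by (rule LeastI_ex) blast

context inst begin

lemma take_walk: "i \<le> h \<Longrightarrow> is_walk w (take (Suc i) ps) \<and> walk_weight w (take (Suc i) ps) = pw i
   \<and> hd (take (Suc i) ps) = hd ps \<and> last (take (Suc i) ps) = P i"
proof -
  assume i: "i \<le> h"
  have len: "length (take (Suc i) ps) = Suc i" using i len_ps by simp
  have "is_walk w (take (Suc i) ps)" unfolding is_walk_def using len edge i by auto
  moreover have "walk_weight w (take (Suc i) ps) = pw i"
    unfolding walk_weight_def pw_def ew_def len by simp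
  moreover have "hd (take (Suc i) ps) = hd ps" using ps_ne by simp
  moreover have "last (take (Suc i) ps) = P i" using len last_conv_nth[of "take (Suc i) ps"] ps_ne by auto
  ultimately show ?thesis by blast
qed

lemma pw_add: "pw (i + m) = pw i + (\<Sum>k<m. ew (i + k))"
  by (induction m) (auto simp: pw_Suc)

lemma drop_walk: "i \<le> h \<Longrightarrow> is_walk w (drop i ps) \<and> walk_weight w (drop i ps) = pw h - pw i
   \<and> hd (drop i ps) = P i \<and> last (drop i ps) = last ps"
proof -
  assume i: "i \<le> h"
  have len: "length (drop i ps) = Suc (h - i)" using i len_ps by simp
  have "is_walk w (drop i ps)" unfolding is_walk_def using len edge i by auto
  moreover have "walk_weight w (drop i ps) = (\<Sum>k<h - i. ew (i + k))"
    unfolding walk_weight_def ew_def len using i len_ps by simp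
  moreover have "pw h = pw i + (\<Sum>k<h - i. ew (i + k))"
  proof -
    have "i + (h - i) = h" using i by simp
    then show ?thesis using pw_add[of i "h - i"] by simp
  qed
  moreover have "hd (drop i ps) = P i" using i len_ps by (simp add: hd_drop_conv_nth)
  moreover have "last (drop i ps) = last ps" using i len_ps by simp
  ultimately show ?thesis by simp
qed

lemma ps_weight: "walk_weight w ps = pw h"
  unfolding walk_weight_def pw_def ew_def by simp

lemma dist_prefix: "i \<le> h \<Longrightarrow> dist w (hd ps) (P i) = pw i"
proof -
  assume i: "i \<le> h"
  note tw = take_walk[OF i] and dw = drop_walk[OF i]
  have le: "dist w (hd ps) (P i) \<le> pw i" using dist_le[of w "take (Suc i) ps"] tw by simp
  obtain ys where ys: "is_walk w ys" "hd ys = hd ps" "last ys = P i" "walk_weight w ys = dist w (hd ps) (P i)"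
    using dist_ach[of w "take (Suc i) ps"] tw by blast
  have c: "is_walk w (ys @ tl (drop i ps)) \<and> walk_weight w (ys @ tl (drop i ps)) = walk_weight w ys + walk_weight w (drop i ps) \<and>
   hd (ys @ tl (drop i ps)) = hd ys \<and> last (ys @ tl (drop i ps)) = last (drop i ps)"
    using walk_concat[of w ys "drop i ps"] ys dw by simp
  have "dist w (hd ps) (last ps) \<le> walk_weight w (ys @ tl (drop i ps))"
    using dist_le[of w "ys @ tl (drop i ps)"] c ys dw by simp
  then have "pw h \<le> dist w (hd ps) (P i) + (pw h - pw i)" using c ys dw pshort ps_weight by simp
  moreover have "pw i \<le> pw h" using pw_mono i by simp
  ultimately show ?thesis using le by linarith
qed

lemma dist_suffix: "i \<le> h \<Longrightarrow> dist w (P i) (last ps) = pw h - pw i"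
proof -
  assume i: "i \<le> h"
  note tw = take_walk[OF i] and dw = drop_walk[OF i]
  have le: "dist w (P i) (last ps) \<le> pw h - pw i" using dist_le[of w "drop i ps"] dw by simp
  obtain ys where ys: "is_walk w ys" "hd ys = P i" "last ys = last ps" "walk_weight w ys = dist w (P i) (last ps)"
    using dist_ach[of w "drop i ps"] dw by blast
  have c: "is_walk w (take (Suc i) ps @ tl ys) \<and> walk_weight w (take (Suc i) ps @ tl ys) = walk_weight w (take (Suc i) ps) + walk_weight w ys \<and>
   hd (take (Suc i) ps @ tl ys) = hd (take (Suc i) ps) \<and> last (take (Suc i) ps @ tl ys) = last ys"
    using walk_concat[of w "take (Suc i) ps" ys] ys tw by simp
  have "dist w (hd ps) (last ps) \<le> walk_weight w (take (Suc i) ps @ tl ys)"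
    using dist_le[of w "take (Suc i) ps @ tl ys"] c ys tw by simp
  then have "pw h \<le> pw i + dist w (P i) (last ps)" using c ys tw pshort ps_weight by simp
  then show ?thesis using le by linarith
qed

end

context inst begin

lemma out_at_eq: "out_at ALG n w ident ps \<rho> r v = OUT (LI v) (S r v) r"
  unfolding out_at_def S_def by (simp add: HS_len)

lemma jj_ge: "mk p \<Longrightarrow> p \<le> i \<Longrightarrow> p \<le> jj i"
proof (induction i)
  case 0 then show ?case by simp
next
  case (Suc i) then show ?case by (cases "p = Suc i") auto
qed

lemma succ_if: "G1 \<Longrightarrow> L + D + card AllI \<le> T \<Longrightarrow> succeeds ALG n w ident ps \<rho> T"
proof -
  assume g: G1 and T: "L + D + card AllI \<le> T"
  define R0 where "R0 = L + D + card AllI"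
  have A: "\<exists>r\<le>T. out_at ALG n w ident ps \<rho> r v \<noteq> None" if v: "v < n" for v
  proof (cases "v \<in> set ps")
    case True
    then obtain i where i: "i \<le> h" "v = P i" using in_path by auto
    then show ?thesis using out_some[OF g i(1), of R0] T R0_def out_at_eq by auto
  next
    case False
    then have "OUT (LI v) (S 0 v) 0 \<noteq> None" using nonpath[OF False] by (simp add: OUT_def)
    then show ?thesis using out_at_eq by (intro exI[of _ 0]) auto
  qed
  have B: "out_at ALG n w ident ps \<rho> (LEAST r. out_at ALG n w ident ps \<rho> r (P i) \<noteq> None) (P i)
        = Some (i, dist w (hd ps) (P i), dist w (P i) (last ps))" if i: "i < length ps" for i
  proof -
    have ih: "i \<le> h" using i len_ps by simp
    have ex: "out_at ALG n w ident ps \<rho> R0 (P i) \<noteq> None" using out_some[OF g ih, of R0] R0_def out_at_eq by simp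
    define r where "r = (LEAST r. out_at ALG n w ident ps \<rho> r (P i) \<noteq> None)"
    have "out_at ALG n w ident ps \<rho> r (P i) \<noteq> None" unfolding r_def by (rule LeastI[of _ R0]) (rule ex)
    then obtain x where x: "OUT (LI (P i)) (S r (P i)) r = Some x" using out_at_eq by auto
    then have "x = (i, pw i, pw h - pw i)" by (rule out_correct[OF ih])
    then show ?thesis using x r_def out_at_eq dist_prefix[OF ih] dist_suffix[OF ih] by simp
  qed
  show ?thesis unfolding succeeds_def using A B by blast
qed

lemma card_AllI: "card AllI \<le> card {p \<in> {1..<h}. \<rho> (P p) = replicate (qf n) True} + 1"
proof -
  have "card AllI \<le> card TI" by (rule card_mono[OF TI_fin AllI_sub])
  also have "\<dots> \<le> card {i. J i}" unfolding TI_J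
  proof (rule card_image_le)
    show "finite {i. J i}" by (rule finite_subset[of _ "{..h}"]) (auto simp: J_def)
  qed
  also have "\<dots> \<le> card (insert h {p \<in> {1..<h}. \<rho> (P p) = replicate (qf n) True})"
    by (rule card_mono) (auto simp: J_def mk_def)
  also have "\<dots> \<le> card {p \<in> {1..<h}. \<rho> (P p) = replicate (qf n) True} + 1"
    by (simp add: card_insert_if)
  finally show ?thesis .
qed

lemma good_succeeds:
  assumes g: "\<forall>i. i \<le> h \<and> L < i \<longrightarrow> (\<exists>p\<in>{i - L..<i}. \<rho> (P p) = replicate (qf n) True)"
    and T: "L + diam n w + (card {p \<in> {1..<h}. \<rho> (P p) = replicate (qf n) True} + 1) \<le> T"
  shows "succeeds ALG n w ident ps \<rho> T"
proof (rule succ_if)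
  show G1 unfolding G1_def
  proof (intro allI impI)
    fix i assume i: "0 < i \<and> i \<le> h"
    show "i - jj (i - 1) \<le> L"
    proof (rule ccontr)
      assume "\<not> i - jj (i - 1) \<le> L"
      then have c: "L < i" "jj (i - 1) < i - L" by auto
      then obtain p where p: "p \<in> {i - L..<i}" "\<rho> (P p) = replicate (qf n) True" using g i by blast
      then have "mk p" unfolding mk_def by simp
      then have "p \<le> jj (i - 1)" using jj_ge[of p "i - 1"] p by auto
      then show False using c p by auto
    qed
  qed
  show "L + D + card AllI \<le> T" using T card_AllI D_def by simp
qed

end

lemma card_bool_lists: "card {xs :: bool list. length xs = q} = 2 ^ q"
  using card_lists_length_eq[of "UNIV :: bool set" q] by simp

lemma finite_bool_lists: "finite {xs :: bool list. length xs = q}"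
  using finite_lists_length_eq[of "UNIV :: bool set" q] by simp

lemma card_rs:
  assumes V: "V \<subseteq> {..<n}"
  shows "card {\<rho> \<in> rand_space n q. \<forall>v\<in>V. Q (\<rho> v)} =
         card {xs. length xs = q \<and> Q xs} ^ card V * (2 ^ q) ^ (n - card V)"
    and "finite {\<rho> \<in> rand_space n q. \<forall>v\<in>V. Q (\<rho> v)}"
proof -
  define B where "B v = (if v \<in> V then {xs. length xs = q \<and> Q xs} else {xs. length xs = q})" for v
  define A where "A = {\<rho> \<in> rand_space n q. \<forall>v\<in>V. Q (\<rho> v)}"
  have bij: "bij_betw (\<lambda>\<rho>. restrict \<rho> {..<n}) A (PiE {..<n} B)"
  proof (rule bij_betw_byWitness[where f' = "\<lambda>f v. if v < n then f v else []"])
    show "\<forall>a\<in>A. (\<lambda>v. if v < n then restrict a {..<n} v else []) = a"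
    proof
      fix a assume "a \<in> A"
      then have "\<forall>v. length (a v) = (if v < n then q else 0)" unfolding A_def rand_space_def by auto
      then have "a v = []" if "\<not> v < n" for v using that by (metis length_0_conv)
      then show "(\<lambda>v. if v < n then restrict a {..<n} v else []) = a" by (auto simp: fun_eq_iff)
    qed
    show "\<forall>a'\<in>PiE {..<n} B. restrict (\<lambda>v. if v < n then a' v else []) {..<n} = a'"
      by (auto simp: fun_eq_iff PiE_def extensional_def)
    show "(\<lambda>\<rho>. restrict \<rho> {..<n}) ` A \<subseteq> PiE {..<n} B"
      using V by (auto simp: A_def rand_space_def B_def split: if_splits)
    show "(\<lambda>f v. if v < n then f v else []) ` PiE {..<n} B \<subseteq> A"
      using V by (auto simp: A_def rand_space_def B_def PiE_def Pi_def split: if_splits)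
  qed
  have fB: "finite (B v)" for v unfolding B_def using finite_bool_lists by auto
  have "card A = card (PiE {..<n} B)" using bij by (rule bij_betw_same_card)
  also have "\<dots> = (\<Prod>v<n. card (B v))" by (rule card_PiE) simp
  also have "\<dots> = (\<Prod>v\<in>{..<n} \<inter> {v. v \<in> V}. card {xs. length xs = q \<and> Q xs}) *
                  (\<Prod>v\<in>{..<n} \<inter> - {v. v \<in> V}. card {xs :: bool list. length xs = q})"
  proof -
    have "(\<Prod>v<n. card (B v)) = (\<Prod>v<n. if v \<in> V then card {xs. length xs = q \<and> Q xs} else card {xs :: bool list. length xs = q})"
      unfolding B_def by (intro prod.cong) auto
    also have "\<dots> = (\<Prod>v\<in>{..<n} \<inter> {v. v \<in> V}. card {xs. length xs = q \<and> Q xs}) *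
                  (\<Prod>v\<in>{..<n} \<inter> - {v. v \<in> V}. card {xs :: bool list. length xs = q})"
      by (rule prod.If_cases) simp
    finally show ?thesis .
  qed
  also have "\<dots> = card {xs. length xs = q \<and> Q xs} ^ card V * (2 ^ q) ^ (n - card V)"
  proof -
    have "{..<n} \<inter> {v. v \<in> V} = V" using V by auto
    moreover have "{..<n} \<inter> - {v. v \<in> V} = {..<n} - V" by auto
    moreover have "card ({..<n} - V) = n - card V" using V finite_subset[OF V]
      by (simp add: card_Diff_subset)
    ultimately show ?thesis by (simp add: card_bool_lists)
  qed
  finally show "card {\<rho> \<in> rand_space n q. \<forall>v\<in>V. Q (\<rho> v)} =
         card {xs. length xs = q \<and> Q xs} ^ card V * (2 ^ q) ^ (n - card V)" unfolding A_def .
  have "finite (PiE {..<n} B)" using fB by (intro finite_PiE) auto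
  then show "finite {\<rho> \<in> rand_space n q. \<forall>v\<in>V. Q (\<rho> v)}"
    using bij_betw_finite[OF bij] unfolding A_def by simp
qed

lemma card_rs_all: "card (rand_space n q) = (2 ^ q) ^ n" "finite (rand_space n q)"
  using card_rs[of "{}" n q "\<lambda>_. True"] by simp_all

lemma card_rep: "card {xs. length xs = q \<and> xs = replicate q True} = 1"
proof -
  have "{xs. length xs = q \<and> xs = replicate q True} = {replicate q True}" by auto
  then show ?thesis by simp
qed

lemma card_nrep: "card {xs. length xs = q \<and> \<not> xs = replicate q True} = 2 ^ q - 1"
proof -
  have "{xs. length xs = q \<and> \<not> xs = replicate q True} = {xs. length xs = q} - {replicate q True}" by auto
  then show ?thesis using card_bool_lists finite_bool_lists by (simp add: card_Diff_singleton_if)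
qed

lemma pow_fact: "real m ^ m \<le> 3 ^ m * fact m"
proof (induction m)
  case 0 then show ?case by simp
next
  case (Suc m)
  have a: "real (Suc m) ^ m \<le> 3 * real m ^ m"
  proof (cases "m = 0")
    case True then show ?thesis by simp
  next
    case False
    then have mp: "real m > 0" by simp
    have "(1 + 1 / real m) ^ m \<le> exp (1 / real m) ^ m"
      by (intro power_mono) (auto simp: add_nonneg_nonneg)
    also have "\<dots> = exp (real m * (1 / real m))" by (rule exp_of_nat_mult[symmetric])
    also have "\<dots> = exp 1" using mp by simp
    also have "\<dots> \<le> 3" by (rule exp_le)
    finally have "(1 + 1 / real m) ^ m \<le> 3" .
    moreover have "real (Suc m) ^ m = (1 + 1 / real m) ^ m * real m ^ m"
      using mp by (simp add: power_mult_distrib[symmetric] field_simps)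
    ultimately show ?thesis using mp by (simp add: mult_right_mono)
  qed
  have "real (Suc m) ^ Suc m = real (Suc m) * real (Suc m) ^ m" by simp
  also have "\<dots> \<le> real (Suc m) * (3 * real m ^ m)" using a by (intro mult_left_mono) auto
  also have "\<dots> \<le> real (Suc m) * (3 * (3 ^ m * fact m))" using Suc by (intro mult_left_mono) auto
  also have "\<dots> = 3 ^ Suc m * fact (Suc m)" by (simp add: algebra_simps)
  finally show ?case .
qed

lemma one_minus_pow: "N \<ge> 1 \<Longrightarrow> (1 - 1 / real N) ^ N \<le> 1 / 2"
proof -
  assume N: "N \<ge> 1"
  have "(1 - 1 / real N) ^ N \<le> exp (- 1 / real N) ^ N"
  proof (rule power_mono)
    show "1 - 1 / real N \<le> exp (- 1 / real N)" using exp_ge_add_one_self[of "- 1 / real N"] by simp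
    show "0 \<le> 1 - 1 / real N" using N by simp
  qed
  also have "\<dots> = exp (real N * (- 1 / real N))" by (rule exp_of_nat_mult[symmetric])
  also have "\<dots> = exp (- 1)" using N by simp
  also have "\<dots> \<le> 1 / 2"
  proof -
    have "2 \<le> exp (1::real)" using exp_ge_add_one_self[of 1] by simp
    then show ?thesis by (simp add: exp_minus field_simps)
  qed
  finally show ?thesis .
qed

context params begin

definition mf :: "nat \<Rightarrow> nat" where "mf n = 6 * (n div 2 ^ qf n + 1) + (c + 1) * floorlog 2 n"

lemma ell: "2 \<le> n \<Longrightarrow> 2 ^ (floorlog 2 n - 1) \<le> n \<and> n < 2 ^ floorlog 2 n \<and> 2 \<le> floorlog 2 n"
proof -
  assume n: "2 \<le> n"
  have b: "2 ^ (floorlog 2 n - 1) \<le> n \<and> n < 2 ^ floorlog 2 n" using floorlog_bounds[of n 2] n by simp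
  have "\<not> floorlog 2 n \<le> 1"
  proof
    assume "floorlog 2 n \<le> 1"
    then have "(2::nat) ^ floorlog 2 n \<le> 2 ^ 1" by (intro power_increasing) auto
    then show False using b n by simp
  qed
  then show ?thesis using b by simp
qed

lemma qb: "2 \<le> n \<Longrightarrow> 2 ^ qf n * 2 ^ qf n \<le> n \<and> n < 4 * (2 ^ qf n * 2 ^ qf n)"
proof -
  assume n: "2 \<le> n"
  note e = ell[OF n]
  have sq: "2 ^ qf n * 2 ^ qf n = (2::nat) ^ (2 * qf n)" by (simp add: power_add[symmetric] mult_2)
  have a1: "2 * qf n \<le> floorlog 2 n - 1" unfolding qf_def by simp
  have a2: "(2::nat) ^ (2 * qf n) \<le> 2 ^ (floorlog 2 n - 1)" using a1 by (intro power_increasing) auto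
  have a3: "floorlog 2 n \<le> 2 * qf n + 2" unfolding qf_def by simp
  have a4: "(2::nat) ^ floorlog 2 n \<le> 2 ^ (2 * qf n + 2)" using a3 by (intro power_increasing) auto
  have a5: "(2::nat) ^ (2 * qf n + 2) = 4 * 2 ^ (2 * qf n)" by (simp add: power_add)
  show ?thesis using e sq a2 a4 a5 by linarith
qed

lemma r_sqrt: "2 \<le> n \<Longrightarrow> real (2 ^ qf n) \<le> sqrt (real n) \<and> real n / real (2 ^ qf n) \<le> 2 * sqrt (real n)"
proof -
  assume n: "2 \<le> n"
  define Q where "Q = real (2 ^ qf n)"
  have Qp: "Q > 0" unfolding Q_def by simp
  have b: "2 ^ qf n * 2 ^ qf n \<le> n" "n < 4 * (2 ^ qf n * 2 ^ qf n)" using qb[OF n] by auto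
  have a: "Q * Q \<le> real n" "real n < 4 * (Q * Q)"
  proof -
    have "real (2 ^ qf n * 2 ^ qf n) \<le> real n" using b(1) by (simp only: of_nat_le_iff)
    then show "Q * Q \<le> real n" unfolding Q_def by simp
    have "real n < real (4 * (2 ^ qf n * 2 ^ qf n))" using b(2) by (simp only: of_nat_less_iff)
    then show "real n < 4 * (Q * Q)" unfolding Q_def by simp
  qed
  have s1: "Q \<le> sqrt (real n)" using a(1) by (intro real_le_rsqrt) (simp add: power2_eq_square)
  have "sqrt (real n) \<le> 2 * Q"
  proof -
    have "sqrt (real n) \<le> sqrt (4 * (Q * Q))" using a(2) by simp
    also have "\<dots> = 2 * Q" using Qp by (simp add: real_sqrt_mult)
    finally show ?thesis .
  qed
  then have "real n / Q \<le> 2 * sqrt (real n)"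
  proof -
    assume s2: "sqrt (real n) \<le> 2 * Q"
    have "real n = sqrt (real n) * sqrt (real n)" by simp
    then have "real n / Q = sqrt (real n) * (sqrt (real n) / Q)" by simp
    also have "\<dots> \<le> sqrt (real n) * 2" using s2 Qp by (intro mult_left_mono) (auto simp: field_simps)
    finally show ?thesis by simp
  qed
  then show ?thesis using s1 Q_def by simp
qed

lemma r_ell: "2 \<le> n \<Longrightarrow> real (floorlog 2 n) \<le> log 2 (real n) + 1 \<and> 1 \<le> log 2 (real n)"
proof -
  assume n: "2 \<le> n"
  have "real (floorlog 2 n - 1) \<le> log 2 (real n)"
    using le_log_of_power[of 2 "floorlog 2 n - 1" "real n"] ell[OF n] by simp
  moreover have "real (floorlog 2 n - 1) = real (floorlog 2 n) - 1" using ell[OF n] by simp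
  moreover have "1 \<le> log 2 (real n)" using n by simp
  ultimately show ?thesis by simp
qed

lemma bad1_bound:
  assumes n: "2 \<le> n"
  shows "real n * (1 - 1 / real (2 ^ qf n)) ^ Lf n \<le> 1 / (2 * real n ^ c)"
proof -
  define N where "N = (2::nat) ^ qf n"
  define K where "K = (c + 2) * floorlog 2 n"
  have L: "Lf n = N * K" unfolding Lf_def N_def K_def by simp
  have N1: "N \<ge> 1" unfolding N_def by simp
  have "(1 - 1 / real N) ^ Lf n = ((1 - 1 / real N) ^ N) ^ K" unfolding L by (simp add: power_mult)
  also have "\<dots> \<le> (1 / 2) ^ K"
    using one_minus_pow[OF N1] N1 by (intro power_mono) (auto simp: field_simps)
  also have "\<dots> = 1 / (2 ^ floorlog 2 n) ^ (c + 2)"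
  proof -
    have "(2::real) ^ K = (2 ^ floorlog 2 n) ^ (c + 2)" unfolding K_def by (metis power_mult mult.commute)
    then show ?thesis by (simp add: power_one_over)
  qed
  also have "\<dots> \<le> 1 / real n ^ (c + 2)"
  proof -
    have "real n \<le> 2 ^ floorlog 2 n" using ell[OF n] by (metis less_imp_le of_nat_le_iff of_nat_numeral of_nat_power)
    then have "real n ^ (c + 2) \<le> (2 ^ floorlog 2 n) ^ (c + 2)" by (intro power_mono) auto
    then show ?thesis using n by (intro divide_left_mono) auto
  qed
  finally have a: "(1 - 1 / real N) ^ Lf n \<le> 1 / real n ^ (c + 2)" .
  have "real n * (1 - 1 / real N) ^ Lf n \<le> real n * (1 / real n ^ (c + 2))"
    using a by (intro mult_left_mono) auto
  also have "\<dots> = 1 / (real n * real n ^ c)" using n by (simp add: power_add power2_eq_square field_simps)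
  also have "\<dots> \<le> 1 / (2 * real n ^ c)" using n by (intro divide_left_mono mult_right_mono) auto
  finally show ?thesis unfolding N_def .
qed

lemma bad2_bound:
  assumes n: "2 \<le> n" and k: "k \<le> n"
  shows "real (k choose mf n) / real (2 ^ qf n) ^ mf n \<le> 1 / (2 * real n ^ c)"
proof -
  define m where "m = mf n"
  define Q where "Q = (2::nat) ^ qf n"
  have Qp: "Q > 0" unfolding Q_def by simp
  have m6: "6 * n \<le> m * Q"
  proof -
    have "n < (n div Q + 1) * Q" using Qp by (metis div_mult_mod_eq add_mult_distrib mod_less_divisor nat_add_left_cancel_less mult_1)
    then show ?thesis unfolding m_def mf_def Q_def[symmetric] by (simp add: add_mult_distrib)
  qed
  have mp: "m > 0" unfolding m_def mf_def by simp
  have c1: "real (k choose m) * fact m \<le> real n ^ m"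
  proof -
    have "(k choose m) * fact m \<le> k ^ m" by (rule binomial_fact_pow)
    also have "\<dots> \<le> n ^ m" using k by (intro power_mono) auto
    finally show ?thesis by (metis of_nat_fact of_nat_le_iff of_nat_mult of_nat_power)
  qed
  have c2: "real m ^ m \<le> 3 ^ m * fact m" by (rule pow_fact)
  have "real (k choose m) * real m ^ m \<le> real (k choose m) * (3 ^ m * fact m)"
    using c2 by (intro mult_left_mono) auto
  also have "\<dots> = 3 ^ m * (real (k choose m) * fact m)" by simp
  also have "\<dots> \<le> 3 ^ m * real n ^ m" using c1 by (intro mult_left_mono) auto
  finally have c3: "real (k choose m) * real m ^ m \<le> (3 * real n) ^ m" by (simp add: power_mult_distrib)
  have "real (k choose m) / real Q ^ m = real (k choose m) * real m ^ m / (real m * real Q) ^ m"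
    using mp Qp by (simp add: power_mult_distrib field_simps)
  also have "\<dots> \<le> (3 * real n) ^ m / (real m * real Q) ^ m"
    using c3 mp Qp by (intro divide_right_mono) auto
  also have "\<dots> = (3 * real n / (real m * real Q)) ^ m" by (simp add: power_divide)
  also have "\<dots> \<le> (1 / 2) ^ m"
  proof (rule power_mono)
    have "6 * real n \<le> real m * real Q" using m6 by (metis of_nat_le_iff of_nat_mult of_nat_numeral)
    then show "3 * real n / (real m * real Q) \<le> 1 / 2" using mp Qp by (simp add: field_simps)
  qed auto
  also have "\<dots> \<le> (1 / 2) ^ ((c + 1) * floorlog 2 n)"
    unfolding m_def mf_def by (intro power_decreasing) auto
  also have "\<dots> = 1 / (2 ^ floorlog 2 n) ^ (c + 1)"
  proof -
    have "(2::real) ^ ((c + 1) * floorlog 2 n) = (2 ^ floorlog 2 n) ^ (c + 1)" by (metis power_mult mult.commute)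
    then show ?thesis by (simp add: power_one_over)
  qed
  also have "\<dots> \<le> 1 / real n ^ (c + 1)"
  proof -
    have "real n \<le> 2 ^ floorlog 2 n" using ell[OF n] by (metis less_imp_le of_nat_le_iff of_nat_numeral of_nat_power)
    then have "real n ^ (c + 1) \<le> (2 ^ floorlog 2 n) ^ (c + 1)" by (intro power_mono) auto
    then show ?thesis using n by (intro divide_left_mono) auto
  qed
  also have "\<dots> = 1 / (real n * real n ^ c)" by simp
  also have "\<dots> \<le> 1 / (2 * real n ^ c)" using n by (intro divide_left_mono mult_right_mono) auto
  finally show ?thesis unfolding m_def Q_def by simp
qed

lemma time_bound:
  assumes n: "2 \<le> n"
  shows "Lf n + D + mf n \<le> nat \<lceil>real (4 * c + 24) * (sqrt (real n) + real D) * (log 2 (real n)) ^ 1\<rceil>"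
proof -
  define lg where "lg = log 2 (real n)"
  define sq where "sq = sqrt (real n)"
  define l where "l = real (floorlog 2 n)"
  have lg1: "1 \<le> lg" and ll: "l \<le> lg + 1" using r_ell[OF n] unfolding lg_def l_def by auto
  have sq1: "1 \<le> sq" unfolding sq_def using n by simp
  have Qs: "real (2 ^ qf n) \<le> sq" "real n / real (2 ^ qf n) \<le> 2 * sq" using r_sqrt[OF n] sq_def by auto
  have l2: "l \<le> 2 * lg" using ll lg1 by simp
  have "real (Lf n) = real (2 ^ qf n) * (real c + 2) * l" unfolding Lf_def l_def by (simp add: algebra_simps)
  also have "\<dots> \<le> sq * (real c + 2) * (2 * lg)"
    using Qs l2 sq1 by (intro mult_mono) (auto simp: l_def)
  finally have L: "real (Lf n) \<le> (2 * real c + 4) * (sq * lg)" by (simp add: algebra_simps)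
  have "real (n div 2 ^ qf n) \<le> real n / real (2 ^ qf n)" by (rule of_nat_div_le_of_nat)
  then have dv: "real (n div 2 ^ qf n) \<le> 2 * sq" using Qs by simp
  have "real (mf n) = 6 * (real (n div 2 ^ qf n) + 1) + (real c + 1) * l" unfolding mf_def l_def by (simp add: algebra_simps)
  also have "\<dots> \<le> 6 * (2 * sq + sq) + (real c + 1) * (2 * lg)"
    using dv sq1 l2 by (intro add_mono mult_left_mono) auto
  also have "\<dots> \<le> 18 * (sq * lg) + (2 * real c + 2) * (sq * lg)"
  proof -
    have "sq \<le> sq * lg" using lg1 sq1 by simp
    moreover have "lg \<le> sq * lg" using lg1 sq1 by simp
    moreover have "real c * lg \<le> real c * (sq * lg)" using \<open>lg \<le> sq * lg\<close> by (intro mult_left_mono) auto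
    ultimately show ?thesis by (simp add: algebra_simps)
  qed
  finally have M: "real (mf n) \<le> (2 * real c + 20) * (sq * lg)" by (simp add: algebra_simps)
  have Dl: "real D \<le> real D * lg" using lg1 mult_left_mono[of 1 lg "real D"] by simp
  have "real (Lf n + D + mf n) \<le> (4 * real c + 24) * (sq * lg) + real D * lg"
  proof -
    have "(2 * real c + 4) * (sq * lg) + (2 * real c + 20) * (sq * lg) = (4 * real c + 24) * (sq * lg)"
      by (simp add: algebra_simps)
    then show ?thesis using L M Dl by simp
  qed
  also have "\<dots> \<le> real (4 * c + 24) * (sq + real D) * lg"
  proof -
    have "0 \<le> real D * lg" using lg1 by simp
    then have "real D * lg \<le> real (4 * c + 24) * (real D * lg)" using mult_right_mono[of 1 "real (4 * c + 24)" "real D * lg"] by simp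
    then show ?thesis by (simp add: algebra_simps)
  qed
  also have "\<dots> \<le> real (nat \<lceil>real (4 * c + 24) * (sq + real D) * lg ^ 1\<rceil>)" by (simp add: real_nat_ceiling_ge)
  finally show ?thesis unfolding sq_def lg_def by (simp only: of_nat_le_iff)
qed

end

context params begin

lemma card_img_P: "inst W I n w ident ps \<Longrightarrow> A \<subseteq> {..length ps - 1} \<Longrightarrow> card ((!) ps ` A) = card A \<and> (!) ps ` A \<subseteq> {..<n}"
proof -
  assume I: "inst W I n w ident ps" and A: "A \<subseteq> {..length ps - 1}"
  have "inj_on ((!) ps) A"
    using inst.P_inj[OF I] A unfolding inj_on_def by (metis atMost_iff subsetD)
  moreover have "(!) ps ` A \<subseteq> {..<n}" using inst.P_lt[OF I] A by auto
  ultimately show ?thesis by (simp add: card_image)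
qed

lemma main:
  assumes n: "2 \<le> n" and v: "valid_instance n W I w ident ps"
  shows "success_prob ALG n w ident ps (nat \<lceil>real (4 * c + 24) * (sqrt (real n) + real (diam n w)) * (log 2 (real n)) ^ 1\<rceil>)
         \<ge> 1 - 1 / real n ^ c"
proof -
  have I: "inst W I n w ident ps" unfolding inst_def using n v by simp
  define T where "T = nat \<lceil>real (4 * c + 24) * (sqrt (real n) + real (diam n w)) * (log 2 (real n)) ^ 1\<rceil>"
  define q where "q = qf n"
  define L where "L = Lf n"
  define m where "m = mf n"
  define h where "h = length ps - 1"
  define RS where "RS = rand_space n q"
  define rep where "rep = replicate q True"
  define I1 where "I1 = {i. i \<le> h \<and> L < i}"
  define I2 where "I2 = {S. S \<subseteq> {1..<h} \<and> card S = m}"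
  define B1 where "B1 = (\<Union>i\<in>I1. {\<rho> \<in> RS. \<forall>v\<in>(!) ps ` {i - L..<i}. \<not> \<rho> v = rep})"
  define B2 where "B2 = (\<Union>S\<in>I2. {\<rho> \<in> RS. \<forall>v\<in>(!) ps ` S. \<rho> v = rep})"
  define G where "G = {\<rho> \<in> RS. succeeds ALG n w ident ps \<rho> T}"
  have hn: "h < n" using inst.h_lt[OF I] h_def by simp
  have finRS: "finite RS" using card_rs_all RS_def by simp
  have cRS: "card RS = (2 ^ q) ^ n" using card_rs_all RS_def by simp
  have sub: "RS - (B1 \<union> B2) \<subseteq> G"
  proof
    fix \<rho> assume r: "\<rho> \<in> RS - (B1 \<union> B2)"
    have g: "\<forall>i. i \<le> length ps - 1 \<and> Lf n < i \<longrightarrow> (\<exists>p\<in>{i - Lf n..<i}. \<rho> (ps ! p) = replicate (qf n) True)"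
      using r unfolding B1_def I1_def h_def L_def rep_def q_def by auto
    have cm: "card {p \<in> {1..<h}. \<rho> (ps ! p) = rep} < m"
    proof (rule ccontr)
      assume "\<not> ?thesis"
      then obtain S where S: "S \<subseteq> {p \<in> {1..<h}. \<rho> (ps ! p) = rep}" "card S = m"
        using obtain_subset_with_card_n[of m "{p \<in> {1..<h}. \<rho> (ps ! p) = rep}"] by auto
      then have "S \<in> I2" unfolding I2_def by auto
      moreover have "\<rho> \<in> {\<rho> \<in> RS. \<forall>v\<in>(!) ps ` S. \<rho> v = rep}" using S r by auto
      ultimately have "\<rho> \<in> B2" unfolding B2_def by auto
      then show False using r by auto
    qed
    have tb: "Lf n + diam n w + mf n \<le> T" using time_bound[OF n] T_def by simp
    have "Lf n + diam n w + (card {p \<in> {1..<length ps - 1}. \<rho> (ps ! p) = replicate (qf n) True} + 1) \<le> T"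
      using cm tb unfolding h_def rep_def q_def m_def by simp
    then have "succeeds ALG n w ident ps \<rho> T" using inst.good_succeeds[OF I g] by simp
    then show "\<rho> \<in> G" using r G_def by auto
  qed
  have fB: "B1 \<subseteq> RS" "B2 \<subseteq> RS" unfolding B1_def B2_def by auto
  have cG: "real (card RS) - real (card B1) - real (card B2) \<le> real (card G)"
  proof -
    have "card RS - card (B1 \<union> B2) \<le> card (RS - (B1 \<union> B2))" by (rule diff_card_le_card_Diff) (use finRS fB in \<open>auto intro: finite_subset\<close>)
    also have "\<dots> \<le> card G" using sub by (intro card_mono) (auto simp: G_def finRS)
    finally have a: "card RS - card (B1 \<union> B2) \<le> card G" .
    have b: "card (B1 \<union> B2) \<le> card B1 + card B2" by (rule card_Un_le)
    have "card (B1 \<union> B2) \<le> card RS" using fB finRS by (intro card_mono) auto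
    then show ?thesis using a b by linarith
  qed
  have N1: "(2::nat) ^ q \<ge> 1" by simp
  have b1: "real (card B1) / real (card RS) \<le> 1 / (2 * real n ^ c)"
  proof (cases "I1 = {}")
    case True then show ?thesis unfolding B1_def by simp
  next
    case False
    then obtain i0 where "i0 \<in> I1" by auto
    then have Ln: "L < n" using hn I1_def by auto
    have each: "card {\<rho> \<in> RS. \<forall>v\<in>(!) ps ` {i - L..<i}. \<not> \<rho> v = rep} = (2 ^ q - 1) ^ L * (2 ^ q) ^ (n - L)"
      if i: "i \<in> I1" for i
    proof -
      have ss: "{i - L..<i} \<subseteq> {..length ps - 1}" using i unfolding I1_def h_def by auto
      have ci: "card ((!) ps ` {i - L..<i}) = L \<and> (!) ps ` {i - L..<i} \<subseteq> {..<n}"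
        using card_img_P[OF I ss] i unfolding I1_def by auto
      show ?thesis unfolding RS_def using card_rs(1)[of "(!) ps ` {i - L..<i}" n q "\<lambda>xs. \<not> xs = rep"] ci card_nrep[of q]
        unfolding rep_def by simp
    qed
    have "card B1 \<le> (\<Sum>i\<in>I1. card {\<rho> \<in> RS. \<forall>v\<in>(!) ps ` {i - L..<i}. \<not> \<rho> v = rep})"
      unfolding B1_def by (rule card_UN_le) (auto simp: I1_def)
    also have "\<dots> = card I1 * ((2 ^ q - 1) ^ L * (2 ^ q) ^ (n - L))" using each by simp
    also have "\<dots> \<le> n * ((2 ^ q - 1) ^ L * (2 ^ q) ^ (n - L))"
    proof -
      have "card I1 \<le> card {..<n}" using hn by (intro card_mono) (auto simp: I1_def)
      then show ?thesis by simp
    qed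
    finally have c1': "card B1 \<le> n * ((2 ^ q - 1) ^ L * (2 ^ q) ^ (n - L))" .
    have e1: "real ((2::nat) ^ q - 1) = 2 ^ q - 1" using N1 by (simp add: of_nat_diff)
    have "real (card B1) \<le> real (n * ((2 ^ q - 1) ^ L * (2 ^ q) ^ (n - L)))"
      using c1' by (simp only: of_nat_le_iff)
    then have c1: "real (card B1) \<le> real n * ((2 ^ q - 1) ^ L * (2 ^ q) ^ (n - L))"
      by (simp only: of_nat_mult of_nat_power e1) simp
    have eq: "real n * ((2 ^ q - 1) ^ L * (2 ^ q) ^ (n - L)) / real (card RS) = real n * (1 - 1 / real (2 ^ q)) ^ L"
    proof -
      have "(2::real) ^ q > 0" by simp
      have "real (card RS) = (2 ^ q) ^ L * (2 ^ q) ^ (n - L)" using cRS Ln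
        by (simp add: power_add[symmetric])
      moreover have "(1 - 1 / (2::real) ^ q) ^ L = (2 ^ q - 1) ^ L / (2 ^ q) ^ L"
      proof -
        have x: "1 - 1 / (2::real) ^ q = (2 ^ q - 1) / 2 ^ q" by (simp add: diff_divide_distrib)
        show ?thesis by (simp only: x power_divide)
      qed
      moreover have "((2::real) ^ q) ^ L > 0" "((2::real) ^ q) ^ (n - L) > 0" by auto
      ultimately show ?thesis by (simp add: divide_simps)
    qed
    have "real (card B1) / real (card RS) \<le> real n * ((2 ^ q - 1) ^ L * (2 ^ q) ^ (n - L)) / real (card RS)"
      using c1 by (intro divide_right_mono) auto
    also have "\<dots> = real n * (1 - 1 / real (2 ^ q)) ^ L" by (rule eq)
    also have "\<dots> \<le> 1 / (2 * real n ^ c)" using bad1_bound[OF n] unfolding q_def L_def .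
    finally show ?thesis .
  qed
  have b2: "real (card B2) / real (card RS) \<le> 1 / (2 * real n ^ c)"
  proof (cases "I2 = {}")
    case True then show ?thesis unfolding B2_def by simp
  next
    case False
    then obtain S0 where "S0 \<in> I2" by auto
    then have mn: "m \<le> n" using card_mono[of "{1..<h}" S0] hn unfolding I2_def by auto
    have each: "card {\<rho> \<in> RS. \<forall>v\<in>(!) ps ` S. \<rho> v = rep} = (2 ^ q) ^ (n - m)" if S: "S \<in> I2" for S
    proof -
      have ss: "S \<subseteq> {..length ps - 1}" using S unfolding I2_def h_def by auto
      have ci: "card ((!) ps ` S) = m \<and> (!) ps ` S \<subseteq> {..<n}"
        using card_img_P[OF I ss] S unfolding I2_def by auto
      show ?thesis unfolding RS_def using card_rs(1)[of "(!) ps ` S" n q "\<lambda>xs. xs = rep"] ci card_rep[of q]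
        unfolding rep_def by simp
    qed
    have fI2: "finite I2" unfolding I2_def by (rule finite_subset[of _ "Pow {1..<h}"]) auto
    have "card B2 \<le> (\<Sum>S\<in>I2. card {\<rho> \<in> RS. \<forall>v\<in>(!) ps ` S. \<rho> v = rep})"
      unfolding B2_def by (rule card_UN_le[OF fI2])
    also have "\<dots> = card I2 * (2 ^ q) ^ (n - m)" using each by simp
    also have "card I2 = (h - 1) choose m" unfolding I2_def using n_subsets[of "{1..<h}" m] by simp
    finally have c2': "card B2 \<le> ((h - 1) choose m) * (2 ^ q) ^ (n - m)" .
    have "real (card B2) \<le> real (((h - 1) choose m) * (2 ^ q) ^ (n - m))"
      using c2' by (simp only: of_nat_le_iff)
    then have c2: "real (card B2) \<le> real ((h - 1) choose m) * (2 ^ q) ^ (n - m)" by simp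
    have "real (card B2) / real (card RS) \<le> real ((h - 1) choose m) * (2 ^ q) ^ (n - m) / real (card RS)"
      using c2 by (intro divide_right_mono) auto
    also have "\<dots> = real ((h - 1) choose m) / real (2 ^ q) ^ m"
    proof -
      have "real (card RS) = (2 ^ q) ^ m * (2 ^ q) ^ (n - m)" using cRS mn
        by (simp add: power_add[symmetric])
      then show ?thesis by (simp add: field_simps)
    qed
    also have "\<dots> \<le> 1 / (2 * real n ^ c)" using bad2_bound[OF n, of "h - 1"] hn unfolding q_def m_def by simp
    finally show ?thesis .
  qed
  have RSp: "real (card RS) > 0" using cRS by simp
  have "success_prob ALG n w ident ps T = real (card G) / real (card RS)"
    unfolding success_prob_def G_def RS_def q_def by simp
  also have "\<dots> \<ge> (real (card RS) - real (card B1) - real (card B2)) / real (card RS)"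
    using cG RSp by (intro divide_right_mono) auto
  finally have "success_prob ALG n w ident ps T \<ge> 1 - real (card B1) / real (card RS) - real (card B2) / real (card RS)"
    using RSp by (simp add: diff_divide_distrib)
  moreover have "1 / (2 * real n ^ c) + 1 / (2 * real n ^ c) = 1 / real n ^ c" by simp
  ultimately have "success_prob ALG n w ident ps T \<ge> 1 - 1 / real n ^ c" using b1 b2 by linarith
  then show ?thesis unfolding T_def .
qed

end

theorem lemma2p5:
  shows "\<forall>(c::nat) (W::nat) (I::nat). \<exists>(A::algorithm) (B::nat) (C::real) (k::nat) (n0::nat).
     congest_bounded A B \<and>
     (\<forall>n w ident ps. n \<ge> n0 \<and> valid_instance n W I w ident ps \<longrightarrow>
        success_prob A n w ident ps
          (nat \<lceil>C * (sqrt (real n) + real (diam n w)) * (log 2 (real n)) ^ k\<rceil>)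
        \<ge> 1 - 1 / real n ^ c)"
proof (intro allI)
  fix c W I :: nat
  interpret params c W I .
  show "\<exists>(A::algorithm) (B::nat) (C::real) (k::nat) (n0::nat).
     congest_bounded A B \<and>
     (\<forall>n w ident ps. n \<ge> n0 \<and> valid_instance n W I w ident ps \<longrightarrow>
        success_prob A n w ident ps
          (nat \<lceil>C * (sqrt (real n) + real (diam n w)) * (log 2 (real n)) ^ k\<rceil>)
        \<ge> 1 - 1 / real n ^ c)"
    apply (rule exI[of _ ALG], rule exI[of _ BB], rule exI[of _ "real (4 * c + 24)"], rule exI[of _ 1], rule exI[of _ 2])
    using congest main by blast
qed

end
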